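(* Let $K$ be a number field and let $\mathcal{D}=(\mathcal{O};\mathfrak{m},\Sigma)$, $\mathcal{D}'=(\mathcal{O}';\mathfrak{m}',\Sigma')$ be level data for $K$ with $\mathcal{O}\subseteq\mathcal{O}'$, $\mathfrak{m}\mathcal{O}'\subseteq\mathfrak{m}'$ and $\Sigma\supseteq\Sigma'$. There exists a unique homomorphism $\overline{\mathrm{ext}}=\overline{\mathrm{ext}}^{\mathcal{D}'}_{\mathcal{D}}:\mathrm{Cl}_{\mathfrak{m},\Sigma}(\mathcal{O})\to\mathrm{Cl}_{\mathfrak{m}',\Sigma'}(\mathcal{O}')$ satisfying $\overline{\mathrm{ext}}([\mathfrak{a}])=[\mathfrak{a}\mathcal{O}']$ for all $\mathfrak{a}\in J^*_{\mathfrak{m}}(\mathcal{O})$, and this map is surjective. Moreover, if $\mathcal{D}''=(\mathcal{O}'';\mathfrak{m}'',\Sigma'')$ is another level datum with $\mathcal{O}'\subseteq\mathcal{O}''$, $\mathfrak{m}'\mathcal{O}''\subseteq\mathfrak{m}''$ and $\Sigma'\supseteq\Sigma''$, then $\overline{\mathrm{ext}}^{\mathcal{D}''}_{\mathcal{D}'}\circ\overline{\mathrm{ext}}^{\mathcal{D}'}_{\mathcal{D}}=\overline{\mathrm{ext}}^{\mathcal{D}''}_{\mathcal{D}}$.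
   Context: A level datum $(\mathcal O;\mathfrak m,\Sigma)$: $\mathcal O$ an order of $K$ (subring containing 1, free $\mathbb Z$-module of rank $[K:\mathbb Q]$), $\mathfrak m$ a nonzero integral $\mathcal O$-ideal, $\Sigma$ a set of real embeddings of $K$. $J^*_{\mathfrak m}(\mathcal O)$: group of invertible fractional $\mathcal O$-ideals coprime to $\mathfrak m$ (a fractional ideal $\mathfrak a$ is coprime to $\mathfrak m$ if $\mathfrak a=(\mathfrak a_1:\mathfrak b_1)=\{x\in K:x\mathfrak b_1\subseteq\mathfrak a_1\}$ with $\mathfrak a_1$ integral, $\mathfrak b_1$ invertible integral, $\mathfrak a_1+\mathfrak m=\mathfrak b_1+\mathfrak m=\mathcal O$). $P_{\mathfrak m,\Sigma}(\mathcal O)=\{\alpha\mathcal O:\alpha\in K^\times,\alpha-1\in\mathfrak m\mathcal O[S_{\mathfrak m}^{-1}],\rho(\alpha)>0\ \forall\rho\in\Sigma\}$ with $S_{\mathfrak m}=\{a\in\mathcal O:a\mathcal O+\mathfrak m=\mathcal O\}$; $\mathrm{Cl}_{\mathfrak m,\Sigma}(\mathcal O)=J^*_{\mathfrak m}(\mathcal O)/P_{\mathfrak m,\Sigma}(\mathcal O)$. *)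

theory Defs
  imports Complex_Main "HOL-Algebra.Coset"
begin

definition Q_basis :: "(nat \<Rightarrow> 'k::field_char_0) \<Rightarrow> nat \<Rightarrow> bool" where
  "Q_basis b n \<longleftrightarrow>
     (\<forall>c::nat \<Rightarrow> rat. (\<Sum>i<n. of_rat (c i) * b i) = 0 \<longrightarrow> (\<forall>i<n. c i = 0)) \<and>
     (\<forall>x. \<exists>c::nat \<Rightarrow> rat. x = (\<Sum>i<n. of_rat (c i) * b i))"

definition number_field :: "'k::field_char_0 itself \<Rightarrow> bool" where
  "number_field _ \<longleftrightarrow> (\<exists>n (b :: nat \<Rightarrow> 'k). Q_basis b n)"

definition nf_degree :: "'k::field_char_0 itself \<Rightarrow> nat" where
  "nf_degree _ = (THE n. \<exists>b :: nat \<Rightarrow> 'k. Q_basis b n)"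

definition Z_span :: "(nat \<Rightarrow> 'k::field_char_0) \<Rightarrow> nat \<Rightarrow> 'k set" where
  "Z_span w n = {x. \<exists>c::nat \<Rightarrow> int. x = (\<Sum>i<n. of_int (c i) * w i)}"

definition Z_indep :: "(nat \<Rightarrow> 'k::field_char_0) \<Rightarrow> nat \<Rightarrow> bool" where
  "Z_indep w n \<longleftrightarrow>
     (\<forall>c::nat \<Rightarrow> int. (\<Sum>i<n. of_int (c i) * w i) = 0 \<longrightarrow> (\<forall>i<n. c i = 0))"

definition is_subring :: "'k::field_char_0 set \<Rightarrow> bool" where
  "is_subring Ord \<longleftrightarrow> 1 \<in> Ord \<and> (\<forall>x\<in>Ord. \<forall>y\<in>Ord. x + y \<in> Ord \<and> x - y \<in> Ord \<and> x * y \<in> Ord)"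

definition is_order :: "'k::field_char_0 set \<Rightarrow> bool" where
  "is_order Ord \<longleftrightarrow> is_subring Ord \<and>
     (\<exists>w. (\<forall>i<nf_degree TYPE('k). w i \<in> Ord) \<and> Z_indep w (nf_degree TYPE('k)) \<and>
          Ord = Z_span w (nf_degree TYPE('k)))"

definition ideal_mult :: "'k::field_char_0 set \<Rightarrow> 'k set \<Rightarrow> 'k set" where
  "ideal_mult A B = {x. \<exists>k (a :: nat \<Rightarrow> 'k) b. (\<forall>i<k. a i \<in> A \<and> b i \<in> B) \<and> x = (\<Sum>i<k. a i * b i)}"

definition ideal_add :: "'k::field_char_0 set \<Rightarrow> 'k set \<Rightarrow> 'k set" where
  "ideal_add A B = {a + b | a b. a \<in> A \<and> b \<in> B}"

definition ideal_colon :: "'k::field_char_0 set \<Rightarrow> 'k set \<Rightarrow> 'k set" where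
  "ideal_colon A B = {x. \<forall>b\<in>B. x * b \<in> A}"

definition principal :: "'k::field_char_0 \<Rightarrow> 'k set \<Rightarrow> 'k set" where
  "principal \<alpha> Ord = {\<alpha> * x | x. x \<in> Ord}"

definition O_submodule :: "'k::field_char_0 set \<Rightarrow> 'k set \<Rightarrow> bool" where
  "O_submodule Ord M \<longleftrightarrow> 0 \<in> M \<and> (\<forall>x\<in>M. \<forall>y\<in>M. x + y \<in> M \<and> x - y \<in> M) \<and>
     (\<forall>r\<in>Ord. \<forall>x\<in>M. r * x \<in> M)"

definition integral_ideal :: "'k::field_char_0 set \<Rightarrow> 'k set \<Rightarrow> bool" where
  "integral_ideal Ord A \<longleftrightarrow> O_submodule Ord A \<and> A \<subseteq> Ord"

definition fractional_ideal :: "'k::field_char_0 set \<Rightarrow> 'k set \<Rightarrow> bool" where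
  "fractional_ideal Ord M \<longleftrightarrow> O_submodule Ord M \<and> M \<noteq> {0} \<and>
     (\<exists>d\<in>Ord. d \<noteq> 0 \<and> (\<forall>x\<in>M. d * x \<in> Ord))"

definition invertible_ideal :: "'k::field_char_0 set \<Rightarrow> 'k set \<Rightarrow> bool" where
  "invertible_ideal Ord M \<longleftrightarrow> fractional_ideal Ord M \<and>
     (\<exists>N. fractional_ideal Ord N \<and> ideal_mult M N = Ord)"

definition coprime_to :: "'k::field_char_0 set \<Rightarrow> 'k set \<Rightarrow> 'k set \<Rightarrow> bool" where
  "coprime_to Ord m a \<longleftrightarrow> (\<exists>a1 b1. integral_ideal Ord a1 \<and> integral_ideal Ord b1 \<and>
     invertible_ideal Ord b1 \<and> ideal_add a1 m = Ord \<and> ideal_add b1 m = Ord \<and> a = ideal_colon a1 b1)"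

definition J_star :: "'k::field_char_0 set \<Rightarrow> 'k set \<Rightarrow> 'k set set" where
  "J_star Ord m = {a. invertible_ideal Ord a \<and> coprime_to Ord m a}"

definition S_m :: "'k::field_char_0 set \<Rightarrow> 'k set \<Rightarrow> 'k set" where
  "S_m Ord m = {a \<in> Ord. ideal_add (principal a Ord) m = Ord}"

definition localize :: "'k::field_char_0 set \<Rightarrow> 'k set \<Rightarrow> 'k set" where
  "localize Ord S = {x / s | x s. x \<in> Ord \<and> s \<in> S}"

definition real_embedding :: "('k::field_char_0 \<Rightarrow> real) \<Rightarrow> bool" where
  "real_embedding \<rho> \<longleftrightarrow> \<rho> 1 = 1 \<and> (\<forall>x y. \<rho> (x + y) = \<rho> x + \<rho> y \<and> \<rho> (x * y) = \<rho> x * \<rho> y)"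

definition P_ray :: "'k::field_char_0 set \<Rightarrow> 'k set \<Rightarrow> ('k \<Rightarrow> real) set \<Rightarrow> 'k set set" where
  "P_ray Ord m \<Sigma> = {principal \<alpha> Ord | \<alpha>. \<alpha> \<noteq> 0 \<and>
      \<alpha> - 1 \<in> ideal_mult m (localize Ord (S_m Ord m)) \<and> (\<forall>\<rho>\<in>\<Sigma>. \<rho> \<alpha> > 0)}"

definition level_datum :: "'k::field_char_0 set \<Rightarrow> 'k set \<Rightarrow> ('k \<Rightarrow> real) set \<Rightarrow> bool" where
  "level_datum Ord m \<Sigma> \<longleftrightarrow> is_order Ord \<and> integral_ideal Ord m \<and> m \<noteq> {0} \<and>
     (\<forall>\<rho>\<in>\<Sigma>. real_embedding \<rho>)"

definition ideal_group :: "'k::field_char_0 set \<Rightarrow> 'k set \<Rightarrow> 'k set monoid" where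
  "ideal_group Ord m = \<lparr>carrier = J_star Ord m, mult = ideal_mult, one = Ord\<rparr>"

definition ray_class_group :: "'k::field_char_0 set \<Rightarrow> 'k set \<Rightarrow> ('k \<Rightarrow> real) set \<Rightarrow> 'k set set monoid" where
  "ray_class_group Ord m \<Sigma> = ideal_group Ord m Mod P_ray Ord m \<Sigma>"

definition ideal_class :: "'k::field_char_0 set \<Rightarrow> 'k set \<Rightarrow> ('k \<Rightarrow> real) set \<Rightarrow> 'k set \<Rightarrow> 'k set set" where
  "ideal_class Ord m \<Sigma> a = r_coset (ideal_group Ord m) (P_ray Ord m \<Sigma>) a"

definition is_ext_map ::
  "'k::field_char_0 set \<Rightarrow> 'k set \<Rightarrow> ('k \<Rightarrow> real) set \<Rightarrow> 'k set \<Rightarrow> 'k set \<Rightarrow> ('k \<Rightarrow> real) set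
   \<Rightarrow> ('k set set \<Rightarrow> 'k set set) \<Rightarrow> bool" where
  "is_ext_map Ord m \<Sigma> Ord' m' \<Sigma>' h \<longleftrightarrow>
     h \<in> hom (ray_class_group Ord m \<Sigma>) (ray_class_group Ord' m' \<Sigma>') \<and>
     (\<forall>a\<in>J_star Ord m. h (ideal_class Ord m \<Sigma> a) = ideal_class Ord' m' \<Sigma>' (ideal_mult a Ord'))"

end

theory Submission
  imports Defs "HOL-Computational_Algebra.Polynomial"
begin


lemma imult_mem: "a \<in> A \<Longrightarrow> b \<in> B \<Longrightarrow> a * b \<in> ideal_mult A B"
  unfolding ideal_mult_def
  by (rule CollectI, rule exI[of _ 1], rule exI[of _ "\<lambda>_. a"], rule exI[of _ "\<lambda>_. b"]) simp

lemma imult_zero: "0 \<in> ideal_mult A B"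
  unfolding ideal_mult_def
  by (rule CollectI, rule exI[of _ 0]) simp

lemma sum_split_add: "(\<Sum>i<k+k'. f i) = (\<Sum>i<k. f i) + (\<Sum>i<k'. f (k + i))"
  for f :: "nat \<Rightarrow> 'a::comm_monoid_add"
  by (induction k') (simp_all add: add_ac)

lemma imult_add:
  fixes x y :: "'k::field_char_0"
  assumes "x \<in> ideal_mult A B" "y \<in> ideal_mult A B"
  shows "x + y \<in> ideal_mult A B"
proof -
  obtain k :: nat and a b where 1: "\<forall>i<k. a i \<in> A \<and> b i \<in> B" "x = (\<Sum>i<k. a i * b i)"
    using assms(1) unfolding ideal_mult_def by blast
  obtain k' :: nat and a' b' where 2: "\<forall>i<k'. a' i \<in> A \<and> b' i \<in> B" "y = (\<Sum>i<k'. a' i * b' i)"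
    using assms(2) unfolding ideal_mult_def by blast
  define a2 where "a2 i = (if i < k then a i else a' (i - k))" for i
  define b2 where "b2 i = (if i < k then b i else b' (i - k))" for i
  have "(\<Sum>i<k+k'. a2 i * b2 i) = (\<Sum>i<k. a2 i * b2 i) + (\<Sum>i<k'. a2 (k + i) * b2 (k + i))"
    by (rule sum_split_add)
  also have "\<dots> = x + y" using 1 2 by (simp add: a2_def b2_def)
  finally have "x + y = (\<Sum>i<k+k'. a2 i * b2 i)" by simp
  moreover have "\<forall>i<k+k'. a2 i \<in> A \<and> b2 i \<in> B" using 1 2 by (auto simp: a2_def b2_def)
  ultimately show ?thesis unfolding ideal_mult_def by blast
qed

lemma imult_induct:
  fixes x :: "'k::field_char_0"
  assumes "x \<in> ideal_mult A B" "P 0" "\<And>x y. P x \<Longrightarrow> P y \<Longrightarrow> P (x + y)"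
    "\<And>a b. a \<in> A \<Longrightarrow> b \<in> B \<Longrightarrow> P (a * b)"
  shows "P x"
proof -
  obtain k :: nat and a b where 1: "\<forall>i<k. a i \<in> A \<and> b i \<in> B" "x = (\<Sum>i<k. a i * b i)"
    using assms(1) unfolding ideal_mult_def by blast
  have "P (\<Sum>i<j. a i * b i)" if "j \<le> k" for j using that
  proof (induction j)
    case 0 then show ?case using assms(2) by simp
  next
    case (Suc j) then show ?case using 1 assms(3,4) by simp
  qed
  then show ?thesis using 1 by simp
qed

lemma imult_comm: "ideal_mult A B = ideal_mult B A"
proof -
  have *: "ideal_mult A B \<subseteq> ideal_mult B A" for A B :: "'k::field_char_0 set"
  proof
    fix x assume "x \<in> ideal_mult A B"
    then show "x \<in> ideal_mult B A"
    proof (rule imult_induct)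
      fix a b assume "a \<in> A" "b \<in> B"
      then show "a * b \<in> ideal_mult B A" using imult_mem[of b B a A] by (simp add: mult.commute)
    qed (auto intro: imult_zero imult_add)
  qed
  show ?thesis using *[of A B] *[of B A] by blast
qed

lemma imult_subset:
  assumes "0 \<in> C" "\<And>x y. x \<in> C \<Longrightarrow> y \<in> C \<Longrightarrow> x + y \<in> C" "\<And>a b. a \<in> A \<Longrightarrow> b \<in> B \<Longrightarrow> a * b \<in> C"
  shows "ideal_mult A B \<subseteq> C"
  using assms by (auto elim!: imult_induct)

lemma imult_mono: "A \<subseteq> A' \<Longrightarrow> B \<subseteq> B' \<Longrightarrow> ideal_mult A B \<subseteq> ideal_mult A' B'"
  by (rule imult_subset) (auto intro: imult_zero imult_add imult_mem)

lemma imult_assoc1: "ideal_mult (ideal_mult A B) C \<subseteq> ideal_mult A (ideal_mult B C)"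
proof (rule imult_subset)
  fix x c assume x: "x \<in> ideal_mult A B" and c: "c \<in> C"
  from x show "x * c \<in> ideal_mult A (ideal_mult B C)"
    by (rule imult_induct) (auto simp: distrib_right mult.assoc intro!: imult_zero imult_add imult_mem c)
qed (auto intro: imult_zero imult_add)

lemma imult_assoc: "ideal_mult (ideal_mult A B) C = ideal_mult A (ideal_mult B C)"
proof
  show "ideal_mult (ideal_mult A B) C \<subseteq> ideal_mult A (ideal_mult B C)" by (rule imult_assoc1)
  have "ideal_mult A (ideal_mult B C) = ideal_mult (ideal_mult C B) A" by (simp add: imult_comm)
  also have "\<dots> \<subseteq> ideal_mult C (ideal_mult B A)" by (rule imult_assoc1)
  also have "\<dots> = ideal_mult (ideal_mult A B) C" by (simp add: imult_comm)
  finally show "ideal_mult A (ideal_mult B C) \<subseteq> ideal_mult (ideal_mult A B) C" .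
qed

definition smul :: "'k::field_char_0 \<Rightarrow> 'k set \<Rightarrow> 'k set" where
  "smul c A = (\<lambda>x. c * x) ` A"

lemma imult_smul: "ideal_mult (smul c A) B = smul c (ideal_mult A B)"
proof
  show "ideal_mult (smul c A) B \<subseteq> smul c (ideal_mult A B)"
  proof (rule imult_subset)
    show "0 \<in> smul c (ideal_mult A B)" unfolding smul_def using imult_zero by force
    show "x + y \<in> smul c (ideal_mult A B)" if "x \<in> smul c (ideal_mult A B)" "y \<in> smul c (ideal_mult A B)" for x y
      using that unfolding smul_def by (auto simp: distrib_left[symmetric] intro!: imageI imult_add)
    show "a * b \<in> smul c (ideal_mult A B)" if "a \<in> smul c A" "b \<in> B" for a b
      using that unfolding smul_def by (auto simp: mult.assoc intro!: imageI imult_mem)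
  qed
  show "smul c (ideal_mult A B) \<subseteq> ideal_mult (smul c A) B"
  proof
    fix y assume "y \<in> smul c (ideal_mult A B)"
    then obtain x where x: "x \<in> ideal_mult A B" "y = c * x" unfolding smul_def by auto
    from x(1) have "c * x \<in> ideal_mult (smul c A) B"
      by (rule imult_induct) (auto simp: distrib_left mult.assoc[symmetric] smul_def intro!: imult_zero imult_add imult_mem)
    then show "y \<in> ideal_mult (smul c A) B" using x by simp
  qed
qed


lemma subring_0: "is_subring R \<Longrightarrow> 0 \<in> R"
  unfolding is_subring_def by (metis diff_self)
lemma subring_1: "is_subring R \<Longrightarrow> 1 \<in> R"
  unfolding is_subring_def by blast
lemma subring_add: "is_subring R \<Longrightarrow> x \<in> R \<Longrightarrow> y \<in> R \<Longrightarrow> x + y \<in> R"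
  unfolding is_subring_def by blast
lemma subring_diff: "is_subring R \<Longrightarrow> x \<in> R \<Longrightarrow> y \<in> R \<Longrightarrow> x - y \<in> R"
  unfolding is_subring_def by blast
lemma subring_mult: "is_subring R \<Longrightarrow> x \<in> R \<Longrightarrow> y \<in> R \<Longrightarrow> x * y \<in> R"
  unfolding is_subring_def by blast
lemma subring_uminus: "is_subring R \<Longrightarrow> x \<in> R \<Longrightarrow> - x \<in> R"
  using subring_diff[of R 0 x] subring_0[of R] by simp
lemma subring_of_nat: "is_subring R \<Longrightarrow> of_nat n \<in> R"
  by (induction n) (auto intro: subring_0 subring_add subring_1)
lemma subring_of_int: "is_subring R \<Longrightarrow> of_int z \<in> R"
  by (cases z rule: int_cases) (auto intro: subring_of_nat subring_uminus simp del: of_nat_Suc)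
lemma subring_power: "is_subring R \<Longrightarrow> x \<in> R \<Longrightarrow> x ^ n \<in> R"
  by (induction n) (auto intro: subring_1 subring_mult)
lemma subring_sum: "is_subring R \<Longrightarrow> (\<And>i. i \<in> I \<Longrightarrow> f i \<in> R) \<Longrightarrow> sum f I \<in> R"
  by (induction I rule: infinite_finite_induct) (auto intro: subring_0 subring_add)

lemma submod_0: "O_submodule R M \<Longrightarrow> 0 \<in> M"
  unfolding O_submodule_def by blast
lemma submod_add: "O_submodule R M \<Longrightarrow> x \<in> M \<Longrightarrow> y \<in> M \<Longrightarrow> x + y \<in> M"
  unfolding O_submodule_def by blast
lemma submod_diff: "O_submodule R M \<Longrightarrow> x \<in> M \<Longrightarrow> y \<in> M \<Longrightarrow> x - y \<in> M"
  unfolding O_submodule_def by blast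
lemma submod_mult: "O_submodule R M \<Longrightarrow> r \<in> R \<Longrightarrow> x \<in> M \<Longrightarrow> r * x \<in> M"
  unfolding O_submodule_def by blast
lemma submod_mult': "O_submodule R M \<Longrightarrow> r \<in> R \<Longrightarrow> x \<in> M \<Longrightarrow> x * r \<in> M"
  using submod_mult[of R M r x] by (simp add: mult.commute)
lemma submod_uminus: "O_submodule R M \<Longrightarrow> x \<in> M \<Longrightarrow> - x \<in> M"
  using submod_diff[of R M 0 x] submod_0[of R M] by simp
lemma submod_sum: "O_submodule R M \<Longrightarrow> (\<And>i. i \<in> I \<Longrightarrow> f i \<in> M) \<Longrightarrow> sum f I \<in> M"
  by (induction I rule: infinite_finite_induct) (simp_all add: submod_0[of R M] submod_add[of R M])
lemma submod_of_int: "O_submodule R M \<Longrightarrow> is_subring R \<Longrightarrow> x \<in> M \<Longrightarrow> of_int z * x \<in> M"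
  using submod_mult[of R M "of_int z" x] subring_of_int[of R z] by blast

lemma subring_submod: "is_subring R \<Longrightarrow> O_submodule R R"
  unfolding O_submodule_def by (simp add: subring_0 subring_add subring_diff subring_mult)

lemma subring_submod_sub: "is_subring R \<Longrightarrow> is_subring R' \<Longrightarrow> R \<subseteq> R' \<Longrightarrow> O_submodule R R'"
  unfolding O_submodule_def by (auto simp add: subring_0 subring_add subring_diff subring_mult subsetD)

lemma submod_sub: "O_submodule R' M \<Longrightarrow> R \<subseteq> R' \<Longrightarrow> O_submodule R M"
  unfolding O_submodule_def by (meson subsetD)

lemma imult_submod:
  assumes "O_submodule R B"
  shows "O_submodule R (ideal_mult A B)"
  unfolding O_submodule_def
proof (intro conjI ballI)
  show "0 \<in> ideal_mult A B" by (rule imult_zero)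
  fix x y assume x: "x \<in> ideal_mult A B" and y: "y \<in> ideal_mult A B"
  show "x + y \<in> ideal_mult A B" using x y by (rule imult_add)
  have "- y \<in> ideal_mult A B" using y
  proof (rule imult_induct[where P="\<lambda>y. - y \<in> ideal_mult A B"])
    show "- 0 \<in> ideal_mult A B" using imult_zero by simp
    show "- (u + v) \<in> ideal_mult A B" if "- u \<in> ideal_mult A B" "- v \<in> ideal_mult A B" for u v
      using that imult_add[of "-u" A B "-v"] by simp
    show "- (a * b) \<in> ideal_mult A B" if "a \<in> A" "b \<in> B" for a b
      using that imult_mem[of a A "-b" B] submod_uminus[OF assms, of b] by simp
  qed
  then show "x - y \<in> ideal_mult A B" using imult_add[OF x] by (metis diff_conv_add_uminus)
next
  fix r x assume r: "r \<in> R" and x: "x \<in> ideal_mult A B"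
  from x show "r * x \<in> ideal_mult A B"
  proof (rule imult_induct[where P="\<lambda>x. r * x \<in> ideal_mult A B"])
    show "r * 0 \<in> ideal_mult A B" using imult_zero by simp
    show "r * (u + v) \<in> ideal_mult A B" if "r * u \<in> ideal_mult A B" "r * v \<in> ideal_mult A B" for u v
      using that imult_add[of "r*u" A B "r*v"] by (simp add: distrib_left)
    show "r * (a * b) \<in> ideal_mult A B" if "a \<in> A" "b \<in> B" for a b
      using that imult_mem[of a A "r*b" B] submod_mult[OF assms r, of b] by (simp add: mult.left_commute)
  qed
qed

lemma imult_submod_left:
  assumes "O_submodule R A"
  shows "O_submodule R (ideal_mult A B)"
  using imult_submod[OF assms, of B] by (simp add: imult_comm)

lemma imult_right_O:
  assumes "is_subring R" "O_submodule R M"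
  shows "ideal_mult M R = M"
proof
  show "ideal_mult M R \<subseteq> M"
    by (rule imult_subset) (auto intro: submod_0[OF assms(2)] submod_add[OF assms(2)] submod_mult'[OF assms(2)])
  show "M \<subseteq> ideal_mult M R"
  proof
    fix x assume "x \<in> M" then show "x \<in> ideal_mult M R"
      using imult_mem[of x M 1 R] subring_1[OF assms(1)] by simp
  qed
qed

lemma imult_left_O:
  assumes "is_subring R" "O_submodule R M"
  shows "ideal_mult R M = M"
  using imult_right_O[OF assms] by (simp add: imult_comm)

lemma smul_smul: "smul a (smul b M) = smul (a * b) M"
  unfolding smul_def by (auto simp: image_image mult.assoc)
lemma smul_1[simp]: "smul 1 M = M"
  unfolding smul_def by simp
lemma smul_mem: "x \<in> M \<Longrightarrow> c * x \<in> smul c M"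
  unfolding smul_def by (rule imageI)
lemma smul_submod: "O_submodule R M \<Longrightarrow> O_submodule R (smul c M)"
  unfolding O_submodule_def smul_def
  by (auto simp: distrib_left[symmetric] right_diff_distrib[symmetric] mult.left_commute[of _ c] intro!: imageI)

lemma imult_smul_right: "ideal_mult A (smul c B) = smul c (ideal_mult A B)"
  by (simp add: imult_comm[of A] imult_smul)

lemma principal_smul: "principal c R = smul c R"
  unfolding principal_def smul_def by auto

lemma imult_principal:
  assumes "is_subring R" "O_submodule R M"
  shows "ideal_mult (principal c R) M = smul c M"
  by (simp add: principal_smul imult_smul imult_left_O[OF assms])

lemma iadd_eq_O:
  assumes "is_subring R" "O_submodule R A" "A \<subseteq> R" "O_submodule R m" "m \<subseteq> R"
  shows "ideal_add A m = R \<longleftrightarrow> (\<exists>a\<in>A. \<exists>y\<in>m. a + y = 1)"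
proof
  assume "ideal_add A m = R"
  then have "1 \<in> ideal_add A m" using subring_1[OF assms(1)] by simp
  then show "\<exists>a\<in>A. \<exists>y\<in>m. a + y = 1" unfolding ideal_add_def by auto
next
  assume "\<exists>a\<in>A. \<exists>y\<in>m. a + y = 1"
  then obtain a y where ay: "a \<in> A" "y \<in> m" "a + y = 1" by blast
  show "ideal_add A m = R"
  proof
    show "ideal_add A m \<subseteq> R" unfolding ideal_add_def using assms(1,3,5) by (auto intro: subring_add)
    show "R \<subseteq> ideal_add A m"
    proof
      fix z assume z: "z \<in> R"
      have "z = z * a + z * y" using ay(3) by (metis distrib_left mult_1_right)
      moreover have "z * a \<in> A" "z * y \<in> m" using z ay assms by (auto intro: submod_mult)
      ultimately show "z \<in> ideal_add A m" unfolding ideal_add_def by blast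
    qed
  qed
qed


locale idl =
  fixes R m :: "'k::field_char_0 set"
  assumes sr: "is_subring R" and mI: "O_submodule R m" and mR: "m \<subseteq> R"
begin

lemma S_iff: "s \<in> S_m R m \<longleftrightarrow> s \<in> R \<and> (\<exists>c\<in>R. \<exists>y\<in>m. s * c + y = 1)"
proof (cases "s \<in> R")
  case True
  have sub: "O_submodule R (principal s R)" unfolding principal_smul
    by (rule smul_submod[OF subring_submod[OF sr]])
  have sub2: "principal s R \<subseteq> R" unfolding principal_def using True subring_mult[OF sr] by auto
  have "ideal_add (principal s R) m = R \<longleftrightarrow> (\<exists>a\<in>principal s R. \<exists>y\<in>m. a + y = 1)"
    by (rule iadd_eq_O[OF sr sub sub2 mI mR])
  also have "\<dots> \<longleftrightarrow> (\<exists>c\<in>R. \<exists>y\<in>m. s * c + y = 1)" unfolding principal_def by blast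
  finally show ?thesis using True unfolding S_m_def by blast
qed (simp add: S_m_def)

lemma S_R: "s \<in> S_m R m \<Longrightarrow> s \<in> R" using S_iff by blast

lemma S_1: "1 \<in> S_m R m"
  unfolding S_iff using subring_1[OF sr] submod_0[OF mI] by (intro conjI bexI[of _ 1] bexI[of _ 0]) auto

lemma S_mult: assumes "s \<in> S_m R m" "t \<in> S_m R m" shows "s * t \<in> S_m R m"
proof -
  obtain c y where c: "c \<in> R" "y \<in> m" "s * c + y = 1" using assms(1) S_iff by blast
  obtain d z where d: "d \<in> R" "z \<in> m" "t * d + z = 1" using assms(2) S_iff by blast
  have sR: "s \<in> R" "t \<in> R" using assms S_R by auto
  have "(s * c + y) * (t * d + z) = 1" using c d by simp
  then have "(s * t) * (c * d) + (s * c * z + y * (t * d + z)) = 1" by (simp add: algebra_simps)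
  moreover have "s * c * z + y * (t * d + z) \<in> m"
    using c d sR by (intro submod_add[OF mI] submod_mult[OF mI] submod_mult'[OF mI] subring_mult[OF sr] subring_add[OF sr]) (auto intro: subsetD[OF mR])
  moreover have "c * d \<in> R" "s * t \<in> R" using c d sR subring_mult[OF sr] by auto
  ultimately show ?thesis unfolding S_iff by blast
qed

lemma m_R: "u \<in> m \<Longrightarrow> u \<in> R" using mR by blast

lemma locm_iff: "x \<in> ideal_mult m (localize R (S_m R m)) \<longleftrightarrow> (\<exists>u\<in>m. \<exists>t\<in>S_m R m. t \<noteq> 0 \<and> x = u / t)"
proof
  assume "\<exists>u\<in>m. \<exists>t\<in>S_m R m. t \<noteq> 0 \<and> x = u / t"
  then obtain u t where ut: "u \<in> m" "t \<in> S_m R m" "x = u / t" by blast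
  have "1 / t \<in> localize R (S_m R m)" unfolding localize_def using ut subring_1[OF sr] by blast
  then show "x \<in> ideal_mult m (localize R (S_m R m))" using imult_mem[OF ut(1)] ut(3) by fastforce
next
  assume "x \<in> ideal_mult m (localize R (S_m R m))"
  then show "\<exists>u\<in>m. \<exists>t\<in>S_m R m. t \<noteq> 0 \<and> x = u / t"
  proof (rule imult_induct[where P="\<lambda>x. \<exists>u\<in>m. \<exists>t\<in>S_m R m. t \<noteq> 0 \<and> x = u / t"])
    show "\<exists>u\<in>m. \<exists>t\<in>S_m R m. t \<noteq> 0 \<and> 0 = u / t"
      using submod_0[OF mI] S_1 by (intro bexI[of _ 0] bexI[of _ 1]) auto
  next
    fix x y assume "\<exists>u\<in>m. \<exists>t\<in>S_m R m. t \<noteq> 0 \<and> x = u / t" "\<exists>u\<in>m. \<exists>t\<in>S_m R m. t \<noteq> 0 \<and> y = u / t"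
    then obtain u t u' t' where h: "u \<in> m" "t \<in> S_m R m" "t \<noteq> 0" "x = u / t" "u' \<in> m" "t' \<in> S_m R m" "t' \<noteq> 0" "y = u' / t'"
      by blast
    have "x + y = (u * t' + u' * t) / (t * t')" using h by (simp add: field_simps)
    moreover have "u * t' + u' * t \<in> m" using h S_R by (intro submod_add[OF mI] submod_mult'[OF mI]) auto
    moreover have "t * t' \<in> S_m R m" "t * t' \<noteq> 0" using h S_mult by auto
    ultimately show "\<exists>u\<in>m. \<exists>t\<in>S_m R m. t \<noteq> 0 \<and> x + y = u / t" by blast
  next
    fix a b assume a: "a \<in> m" and b: "b \<in> localize R (S_m R m)"
    then obtain z s where zs: "z \<in> R" "s \<in> S_m R m" "b = z / s" unfolding localize_def by blast
    show "\<exists>u\<in>m. \<exists>t\<in>S_m R m. t \<noteq> 0 \<and> a * b = u / t"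
    proof (cases "s = 0")
      case True
      then show ?thesis using submod_0[OF mI] S_1 zs by (intro bexI[of _ 0] bexI[of _ 1]) auto
    next
      case False
      then show ?thesis using zs a submod_mult'[OF mI, of z a] by (intro bexI[of _ "a * z"] bexI[of _ s]) auto
    qed
  qed
qed

definition gens :: "('k \<Rightarrow> real) set \<Rightarrow> 'k set" where
  "gens \<Sigma> = {\<alpha>. \<alpha> \<noteq> 0 \<and> (\<exists>u\<in>m. \<exists>t\<in>S_m R m. t \<noteq> 0 \<and> \<alpha> - 1 = u / t) \<and> (\<forall>\<rho>\<in>\<Sigma>. \<rho> \<alpha> > 0)}"

lemma P_ray_eq: "P_ray R m \<Sigma> = (\<lambda>\<alpha>. principal \<alpha> R) ` gens \<Sigma>"
  unfolding P_ray_def gens_def locm_iff by blast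

end

lemma emb_0: "real_embedding \<rho> \<Longrightarrow> \<rho> 0 = 0"
  unfolding real_embedding_def by (metis add_0 add_cancel_right_right)
lemma emb_add: "real_embedding \<rho> \<Longrightarrow> \<rho> (x + y) = \<rho> x + \<rho> y"
  unfolding real_embedding_def by blast
lemma emb_mult: "real_embedding \<rho> \<Longrightarrow> \<rho> (x * y) = \<rho> x * \<rho> y"
  unfolding real_embedding_def by blast
lemma emb_1: "real_embedding \<rho> \<Longrightarrow> \<rho> 1 = 1"
  unfolding real_embedding_def by blast
lemma emb_uminus: "real_embedding \<rho> \<Longrightarrow> \<rho> (- x) = - \<rho> x"
  using emb_add[of \<rho> x "-x"] emb_0[of \<rho>] by simp
lemma emb_diff: "real_embedding \<rho> \<Longrightarrow> \<rho> (x - y) = \<rho> x - \<rho> y"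
  using emb_add[of \<rho> x "-y"] emb_uminus[of \<rho> y] by simp
lemma emb_inverse: "real_embedding \<rho> \<Longrightarrow> x \<noteq> 0 \<Longrightarrow> \<rho> (inverse x) = inverse (\<rho> x)"
  using emb_mult[of \<rho> x "inverse x"] emb_1[of \<rho>] by (simp add: inverse_unique)
lemma emb_divide: "real_embedding \<rho> \<Longrightarrow> y \<noteq> 0 \<Longrightarrow> \<rho> (x / y) = \<rho> x / \<rho> y"
  using emb_mult[of \<rho> x "inverse y"] emb_inverse[of \<rho> y] by (simp add: divide_inverse)
lemma emb_of_nat: "real_embedding \<rho> \<Longrightarrow> \<rho> (of_nat n) = of_nat n"
  by (induction n) (simp_all add: emb_0 emb_add emb_1)
lemma emb_of_int: "real_embedding \<rho> \<Longrightarrow> \<rho> (of_int z) = of_int z"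
  by (cases z rule: int_cases) (simp_all add: emb_of_nat emb_uminus del: of_nat_Suc)

context idl begin

lemma gens_1: "1 \<in> gens \<Sigma>" if "\<forall>\<rho>\<in>\<Sigma>. real_embedding \<rho>"
proof -
  have "\<exists>u\<in>m. \<exists>t\<in>S_m R m. t \<noteq> 0 \<and> (1::'k) - 1 = u / t"
    using submod_0[OF mI] S_1 by (intro bexI[of _ 0] bexI[of _ 1]) auto
  moreover have "\<forall>\<rho>\<in>\<Sigma>. \<rho> 1 > 0" using that emb_1 by fastforce
  ultimately show ?thesis unfolding gens_def by auto
qed

lemma gens_mult:
  assumes "\<forall>\<rho>\<in>\<Sigma>. real_embedding \<rho>" "\<alpha> \<in> gens \<Sigma>" "\<beta> \<in> gens \<Sigma>"
  shows "\<alpha> * \<beta> \<in> gens \<Sigma>"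
proof -
  obtain u t where a: "\<alpha> \<noteq> 0" "u \<in> m" "t \<in> S_m R m" "t \<noteq> 0" "\<alpha> - 1 = u / t" "\<forall>\<rho>\<in>\<Sigma>. \<rho> \<alpha> > 0"
    using assms(2) unfolding gens_def by blast
  obtain u' t' where b: "\<beta> \<noteq> 0" "u' \<in> m" "t' \<in> S_m R m" "t' \<noteq> 0" "\<beta> - 1 = u' / t'" "\<forall>\<rho>\<in>\<Sigma>. \<rho> \<beta> > 0"
    using assms(3) unfolding gens_def by blast
  have ab: "\<alpha> = 1 + u / t" "\<beta> = 1 + u' / t'" using a b by (simp_all add: algebra_simps)
  then have e1: "\<alpha> * \<beta> - 1 = (u * t' + u' * t + u * u') / (t * t')" using a(4) b(4)
    by (subst ab(1), subst ab(2)) (simp add: field_simps)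
  have e2: "u * t' + u' * t + u * u' \<in> m" using a b S_R m_R
    by (intro submod_add[OF mI] submod_mult'[OF mI]) auto
  have e3: "t * t' \<in> S_m R m" "t * t' \<noteq> 0" using a b S_mult by auto
  have "\<exists>u\<in>m. \<exists>t\<in>S_m R m. t \<noteq> 0 \<and> \<alpha> * \<beta> - 1 = u / t" using e1 e2 e3 by blast
  moreover have "\<forall>\<rho>\<in>\<Sigma>. \<rho> (\<alpha> * \<beta>) > 0"
  proof
    fix \<rho> assume r: "\<rho> \<in> \<Sigma>"
    then show "\<rho> (\<alpha> * \<beta>) > 0" using a(6) b(6) assms(1) emb_mult[of \<rho> \<alpha> \<beta>] by simp
  qed
  ultimately show ?thesis unfolding gens_def using a(1) b(1) by simp
qed

lemma gens_div:
  assumes "\<forall>\<rho>\<in>\<Sigma>. real_embedding \<rho>" "\<alpha> \<in> gens \<Sigma>" "\<beta> \<in> gens \<Sigma>"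
  shows "\<alpha> / \<beta> \<in> gens \<Sigma>"
proof -
  obtain u t where a: "\<alpha> \<noteq> 0" "u \<in> m" "t \<in> S_m R m" "t \<noteq> 0" "\<alpha> - 1 = u / t" "\<forall>\<rho>\<in>\<Sigma>. \<rho> \<alpha> > 0"
    using assms(2) unfolding gens_def by blast
  obtain u' t' where b: "\<beta> \<noteq> 0" "u' \<in> m" "t' \<in> S_m R m" "t' \<noteq> 0" "\<beta> - 1 = u' / t'" "\<forall>\<rho>\<in>\<Sigma>. \<rho> \<beta> > 0"
    using assms(3) unfolding gens_def by blast
  have ab: "\<alpha> = 1 + u / t" "\<beta> = 1 + u' / t'" using a b by (simp_all add: algebra_simps)
  define y where "y = t' + u'"
  have "\<beta> = y / t'" using ab b unfolding y_def by (simp add: field_simps)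
  then have y0: "y \<noteq> 0" using b by auto
  obtain c z where cz: "c \<in> R" "z \<in> m" "t' * c + z = 1" using b S_iff by blast
  have "y * c + (z - u' * c) = 1" using cz unfolding y_def by (simp add: algebra_simps)
  moreover have "z - u' * c \<in> m" using cz b by (intro submod_diff[OF mI] submod_mult'[OF mI]) auto
  moreover have "y \<in> R" unfolding y_def using b S_R m_R subring_add[OF sr] by auto
  ultimately have yS: "y \<in> S_m R m" using cz S_iff by blast
  have nz: "t' * t + t * u' \<noteq> 0" using a(4) y0 unfolding y_def by (metis distrib_left mult.commute mult_eq_0_iff)
  have "\<alpha> / \<beta> - 1 = (u * t' - u' * t) / (t * y)" using a(4) b(4) y0 nz unfolding y_def
    by (subst ab(1), subst ab(2)) (simp add: field_simps)
  moreover have "u * t' - u' * t \<in> m" using a b S_R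
    by (intro submod_diff[OF mI] submod_mult'[OF mI]) auto
  moreover have "t * y \<in> S_m R m" "t * y \<noteq> 0" using a yS y0 S_mult by auto
  moreover have "\<forall>\<rho>\<in>\<Sigma>. \<rho> (\<alpha> / \<beta>) > 0"
  proof
    fix \<rho> assume r: "\<rho> \<in> \<Sigma>"
    then show "\<rho> (\<alpha> / \<beta>) > 0" using a(6) b(6) b(1) assms(1) emb_divide[of \<rho> \<beta> \<alpha>] by simp
  qed
  moreover have "\<alpha> / \<beta> \<noteq> 0" using a b by simp
  ultimately show ?thesis unfolding gens_def by blast
qed

end

lemma gens_mono:
  assumes "idl R m" "idl R' m'" "R \<subseteq> R'" "m \<subseteq> m'" "\<Sigma>' \<subseteq> \<Sigma>"
  shows "idl.gens R m \<Sigma> \<subseteq> idl.gens R' m' \<Sigma>'"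
proof -
  have "S_m R m \<subseteq> S_m R' m'"
    using idl.S_iff[OF assms(1)] idl.S_iff[OF assms(2)] assms(3,4) by blast
  then show ?thesis
    unfolding idl.gens_def[OF assms(1)] idl.gens_def[OF assms(2)] using assms(4,5) by blast
qed


lemma imult_4: "ideal_mult (ideal_mult A C) (ideal_mult B C) = ideal_mult (ideal_mult A B) (ideal_mult C C)"
  by (metis imult_assoc imult_comm)

lemma frac_submod: "fractional_ideal R a \<Longrightarrow> O_submodule R a"
  unfolding fractional_ideal_def by blast

lemma frac_nonzero: "fractional_ideal R a \<Longrightarrow> \<exists>x\<in>a. x \<noteq> 0"
  unfolding fractional_ideal_def using submod_0 by blast

lemma RR: "is_subring R \<Longrightarrow> ideal_mult R R = R"
  by (rule imult_right_O[OF _ subring_submod])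

lemma RR': "is_subring R \<Longrightarrow> is_subring R' \<Longrightarrow> R \<subseteq> R' \<Longrightarrow> ideal_mult R R' = R'"
  by (rule imult_left_O[OF _ subring_submod_sub])

lemma frac_ext:
  assumes R: "is_subring R" and R': "is_subring R'" and sub: "R \<subseteq> R'" and a: "fractional_ideal R a"
  shows "fractional_ideal R' (ideal_mult a R')"
proof -
  have sm: "O_submodule R' (ideal_mult a R')" by (rule imult_submod[OF subring_submod[OF R']])
  obtain x where x: "x \<in> a" "x \<noteq> 0" using frac_nonzero[OF a] by blast
  have "x * 1 \<in> ideal_mult a R'" by (rule imult_mem[OF x(1) subring_1[OF R']])
  then have nz: "ideal_mult a R' \<noteq> {0}" using x by auto
  obtain d where d: "d \<in> R" "d \<noteq> 0" "\<forall>x\<in>a. d * x \<in> R" using a unfolding fractional_ideal_def by blast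
  have "d * z \<in> R'" if "z \<in> ideal_mult a R'" for z
    using that
  proof (rule imult_induct[where P="\<lambda>z. d * z \<in> R'"])
    show "d * 0 \<in> R'" using subring_0[OF R'] by simp
    show "d * (u + v) \<in> R'" if "d * u \<in> R'" "d * v \<in> R'" for u v
      using that subring_add[OF R'] by (simp add: distrib_left)
    show "d * (p * q) \<in> R'" if "p \<in> a" "q \<in> R'" for p q
      using that d sub subring_mult[OF R', of "d*p" q] by (auto simp: mult.assoc)
  qed
  then show ?thesis unfolding fractional_ideal_def using sm nz d sub by blast
qed

lemma inv_ext:
  assumes R: "is_subring R" and R': "is_subring R'" and sub: "R \<subseteq> R'" and a: "invertible_ideal R a"
  shows "invertible_ideal R' (ideal_mult a R')"
proof -
  obtain N where N: "fractional_ideal R N" "ideal_mult a N = R" using a unfolding invertible_ideal_def by blast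
  have "ideal_mult (ideal_mult a R') (ideal_mult N R') = ideal_mult (ideal_mult a N) (ideal_mult R' R')"
    by (rule imult_4)
  also have "\<dots> = R'" using N(2) RR[OF R'] RR'[OF R R' sub] by simp
  finally show ?thesis unfolding invertible_ideal_def
    using frac_ext[OF R R' sub] a N(1) unfolding invertible_ideal_def by blast
qed

lemma colon_eq:
  assumes R: "is_subring R" and A: "O_submodule R A" and B: "O_submodule R B" and Bi: "O_submodule R Bi"
    and inv: "ideal_mult B Bi = R"
  shows "ideal_colon A B = ideal_mult A Bi"
proof
  show "ideal_colon A B \<subseteq> ideal_mult A Bi"
  proof
    fix x assume x: "x \<in> ideal_colon A B"
    have "1 \<in> ideal_mult B Bi" using inv subring_1[OF R] by simp
    then have "x * 1 \<in> ideal_mult A Bi"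
    proof (rule imult_induct[where P="\<lambda>z. x * z \<in> ideal_mult A Bi"])
      show "x * 0 \<in> ideal_mult A Bi" using imult_zero by simp
      show "x * (u + v) \<in> ideal_mult A Bi" if "x * u \<in> ideal_mult A Bi" "x * v \<in> ideal_mult A Bi" for u v
        using that imult_add by (simp add: distrib_left)
      show "x * (p * q) \<in> ideal_mult A Bi" if "p \<in> B" "q \<in> Bi" for p q
      proof -
        have "x * p \<in> A" using x that unfolding ideal_colon_def by blast
        then show ?thesis using imult_mem[of "x*p" A q Bi] that by (simp add: mult.assoc)
      qed
    qed
    then show "x \<in> ideal_mult A Bi" by simp
  qed
  show "ideal_mult A Bi \<subseteq> ideal_colon A B"
  proof
    fix z assume z: "z \<in> ideal_mult A Bi"
    show "z \<in> ideal_colon A B" unfolding ideal_colon_def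
    proof (intro CollectI ballI)
      fix b assume b: "b \<in> B"
      from z show "z * b \<in> A"
      proof (rule imult_induct[where P="\<lambda>z. z * b \<in> A"])
        show "0 * b \<in> A" using submod_0[OF A] by simp
        show "(u + v) * b \<in> A" if "u * b \<in> A" "v * b \<in> A" for u v
          using that submod_add[OF A] by (simp add: distrib_right)
        show "(p * q) * b \<in> A" if "p \<in> A" "q \<in> Bi" for p q
        proof -
          have "b * q \<in> R" using imult_mem[OF b that(2)] inv by simp
          then show ?thesis using submod_mult'[OF A _ that(1), of "b * q"] by (simp add: ac_simps)
        qed
      qed
    qed
  qed
qed

lemma integral_ext:
  assumes R': "is_subring R'" and sub: "R \<subseteq> R'" and a: "integral_ideal R a"
  shows "integral_ideal R' (ideal_mult a R')"
  unfolding integral_ideal_def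
proof
  show "O_submodule R' (ideal_mult a R')" by (rule imult_submod[OF subring_submod[OF R']])
  show "ideal_mult a R' \<subseteq> R'"
    by (rule imult_subset) (use a sub R' in \<open>auto simp: integral_ideal_def intro: subring_0 subring_add subring_mult\<close>)
qed

lemma integral_submod: "integral_ideal R a \<Longrightarrow> O_submodule R a" unfolding integral_ideal_def by blast
lemma integral_sub: "integral_ideal R a \<Longrightarrow> a \<subseteq> R" unfolding integral_ideal_def by blast

lemma iadd_ext:
  assumes R: "is_subring R" and R': "is_subring R'" and sub: "R \<subseteq> R'"
    and a: "integral_ideal R a" and m: "integral_ideal R m" and m': "integral_ideal R' m'"
    and mm: "ideal_mult m R' \<subseteq> m'" and cop: "ideal_add a m = R"
  shows "ideal_add (ideal_mult a R') m' = R'"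
proof -
  obtain x y where xy: "x \<in> a" "y \<in> m" "x + y = 1"
    using iadd_eq_O[OF R integral_submod[OF a] integral_sub[OF a] integral_submod[OF m] integral_sub[OF m]] cop by blast
  have "x * 1 \<in> ideal_mult a R'" "y * 1 \<in> ideal_mult m R'" using xy subring_1[OF R'] imult_mem by blast+
  then have "x \<in> ideal_mult a R'" "y \<in> m'" using mm by auto
  then show ?thesis using xy integral_ext[OF R' sub a]
    using iadd_eq_O[OF R' integral_submod[OF integral_ext[OF R' sub a]] integral_sub[OF integral_ext[OF R' sub a]]
        integral_submod[OF m'] integral_sub[OF m']] by blast
qed

lemma inv_frac: "invertible_ideal R a \<Longrightarrow> fractional_ideal R a" unfolding invertible_ideal_def by blast

lemma J_ext:
  assumes R: "is_subring R" and R': "is_subring R'" and sub: "R \<subseteq> R'"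
    and m: "integral_ideal R m" and m': "integral_ideal R' m'"
    and mm: "ideal_mult m R' \<subseteq> m'" and a: "a \<in> J_star R m"
  shows "ideal_mult a R' \<in> J_star R' m'"
proof -
  have ainv: "invertible_ideal R a" using a unfolding J_star_def by blast
  obtain a1 b1 where ab: "integral_ideal R a1" "integral_ideal R b1" "invertible_ideal R b1"
    "ideal_add a1 m = R" "ideal_add b1 m = R" "a = ideal_colon a1 b1"
    using a unfolding J_star_def coprime_to_def by blast
  obtain N where N: "fractional_ideal R N" "ideal_mult b1 N = R" using ab(3) unfolding invertible_ideal_def by blast
  have a_eq: "a = ideal_mult a1 N"
    using ab(6) colon_eq[OF R integral_submod[OF ab(1)] integral_submod[OF ab(2)] frac_submod[OF N(1)] N(2)] by simp
  have NR': "ideal_mult (ideal_mult b1 R') (ideal_mult N R') = R'"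
    using imult_4[of b1 R' N] N(2) RR[OF R'] RR'[OF R R' sub] by simp
  have "ideal_mult a R' = ideal_mult (ideal_mult a1 R') (ideal_mult N R')"
    using imult_4[of a1 R' N] a_eq RR[OF R'] by simp
  also have "\<dots> = ideal_colon (ideal_mult a1 R') (ideal_mult b1 R')"
    by (rule colon_eq[symmetric, OF R' imult_submod[OF subring_submod[OF R']] imult_submod[OF subring_submod[OF R']]
          imult_submod[OF subring_submod[OF R']] NR'])
  finally have eq: "ideal_mult a R' = ideal_colon (ideal_mult a1 R') (ideal_mult b1 R')" .
  have "coprime_to R' m' (ideal_mult a R')"
    unfolding coprime_to_def
    using integral_ext[OF R' sub ab(1)] integral_ext[OF R' sub ab(2)] inv_ext[OF R R' sub ab(3)]
      iadd_ext[OF R R' sub ab(1) m m' mm ab(4)] iadd_ext[OF R R' sub ab(2) m m' mm ab(5)] eq by blast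
  then show ?thesis unfolding J_star_def using inv_ext[OF R R' sub ainv] by blast
qed

lemma J_submod: "a \<in> J_star R m \<Longrightarrow> O_submodule R a"
  unfolding J_star_def using inv_frac frac_submod by blast

context idl begin

lemma class_eq:
  assumes "O_submodule R M"
  shows "ideal_class R m \<Sigma> M = (\<lambda>\<alpha>. smul \<alpha> M) ` gens \<Sigma>"
proof -
  have "ideal_class R m \<Sigma> M = (\<Union>h\<in>P_ray R m \<Sigma>. {ideal_mult h M})"
    unfolding ideal_class_def r_coset_def ideal_group_def by simp
  also have "\<dots> = (\<Union>\<alpha>\<in>gens \<Sigma>. {ideal_mult (principal \<alpha> R) M})" unfolding P_ray_eq by blast
  also have "\<dots> = (\<lambda>\<alpha>. smul \<alpha> M) ` gens \<Sigma>" using imult_principal[OF sr assms] by auto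
  finally show ?thesis .
qed

lemma class_smul:
  assumes emb: "\<forall>\<rho>\<in>\<Sigma>. real_embedding \<rho>" and M: "O_submodule R M" and g: "\<gamma> \<in> gens \<Sigma>"
  shows "ideal_class R m \<Sigma> (smul \<gamma> M) = ideal_class R m \<Sigma> M"
proof -
  have "ideal_class R m \<Sigma> (smul \<gamma> M) = (\<lambda>\<alpha>. smul (\<alpha> * \<gamma>) M) ` gens \<Sigma>"
    unfolding class_eq[OF smul_submod[OF M]] smul_smul by simp
  also have "\<dots> = (\<lambda>\<alpha>. smul \<alpha> M) ` gens \<Sigma>"
  proof
    show "(\<lambda>\<alpha>. smul (\<alpha> * \<gamma>) M) ` gens \<Sigma> \<subseteq> (\<lambda>\<alpha>. smul \<alpha> M) ` gens \<Sigma>"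
      using gens_mult[OF emb _ g] by blast
    show "(\<lambda>\<alpha>. smul \<alpha> M) ` gens \<Sigma> \<subseteq> (\<lambda>\<alpha>. smul (\<alpha> * \<gamma>) M) ` gens \<Sigma>"
    proof
      fix X assume "X \<in> (\<lambda>\<alpha>. smul \<alpha> M) ` gens \<Sigma>"
      then obtain \<alpha> where a: "\<alpha> \<in> gens \<Sigma>" "X = smul \<alpha> M" by blast
      have g0: "\<gamma> \<noteq> 0" using g unfolding gens_def by blast
      have "X = smul ((\<alpha> / \<gamma>) * \<gamma>) M" using a g0 by simp
      moreover have "\<alpha> / \<gamma> \<in> gens \<Sigma>" by (rule gens_div[OF emb a(1) g])
      ultimately show "X \<in> (\<lambda>\<alpha>. smul (\<alpha> * \<gamma>) M) ` gens \<Sigma>" by blast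
    qed
  qed
  also have "\<dots> = ideal_class R m \<Sigma> M" unfolding class_eq[OF M] ..
  finally show ?thesis .
qed

lemma class_mult:
  assumes emb: "\<forall>\<rho>\<in>\<Sigma>. real_embedding \<rho>" and A: "O_submodule R A" and B: "O_submodule R B"
  shows "set_mult (ideal_group R m) (ideal_class R m \<Sigma> A) (ideal_class R m \<Sigma> B) = ideal_class R m \<Sigma> (ideal_mult A B)"
proof -
  have AB: "O_submodule R (ideal_mult A B)" by (rule imult_submod[OF B])
  have "set_mult (ideal_group R m) (ideal_class R m \<Sigma> A) (ideal_class R m \<Sigma> B)
      = (\<Union>X\<in>(\<lambda>\<alpha>. smul \<alpha> A) ` gens \<Sigma>. \<Union>Y\<in>(\<lambda>\<alpha>. smul \<alpha> B) ` gens \<Sigma>. {ideal_mult X Y})"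
    unfolding set_mult_def class_eq[OF A] class_eq[OF B] by (simp add: ideal_group_def)
  also have "\<dots> = (\<Union>\<alpha>\<in>gens \<Sigma>. \<Union>\<beta>\<in>gens \<Sigma>. {smul (\<beta> * \<alpha>) (ideal_mult A B)})"
    by (simp add: imult_smul imult_smul_right smul_smul)
  also have "\<dots> = (\<lambda>\<alpha>. smul \<alpha> (ideal_mult A B)) ` gens \<Sigma>"
  proof
    show "(\<Union>\<alpha>\<in>gens \<Sigma>. \<Union>\<beta>\<in>gens \<Sigma>. {smul (\<beta> * \<alpha>) (ideal_mult A B)}) \<subseteq> (\<lambda>\<alpha>. smul \<alpha> (ideal_mult A B)) ` gens \<Sigma>"
      using gens_mult[OF emb] by blast
    show "(\<lambda>\<alpha>. smul \<alpha> (ideal_mult A B)) ` gens \<Sigma> \<subseteq> (\<Union>\<alpha>\<in>gens \<Sigma>. \<Union>\<beta>\<in>gens \<Sigma>. {smul (\<beta> * \<alpha>) (ideal_mult A B)})"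
    proof
      fix X assume "X \<in> (\<lambda>\<alpha>. smul \<alpha> (ideal_mult A B)) ` gens \<Sigma>"
      then obtain \<alpha> where a: "\<alpha> \<in> gens \<Sigma>" "X = smul \<alpha> (ideal_mult A B)" by blast
      then have "X = smul (1 * \<alpha>) (ideal_mult A B)" by simp
      then show "X \<in> (\<Union>\<alpha>\<in>gens \<Sigma>. \<Union>\<beta>\<in>gens \<Sigma>. {smul (\<beta> * \<alpha>) (ideal_mult A B)})"
        using a(1) gens_1[OF emb] by blast
    qed
  qed
  also have "\<dots> = ideal_class R m \<Sigma> (ideal_mult A B)" unfolding class_eq[OF AB] ..
  finally show ?thesis .
qed

lemma carrier_eq: "carrier (ray_class_group R m \<Sigma>) = ideal_class R m \<Sigma> ` J_star R m"
  unfolding ray_class_group_def FactGroup_def RCOSETS_def ideal_class_def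
  by (auto simp: ideal_group_def)

lemma mult_eq: "monoid.mult (ray_class_group R m \<Sigma>) = set_mult (ideal_group R m)"
  unfolding ray_class_group_def FactGroup_def by simp

lemma class_self: "\<forall>\<rho>\<in>\<Sigma>. real_embedding \<rho> \<Longrightarrow> O_submodule R M \<Longrightarrow> M \<in> ideal_class R m \<Sigma> M"
  using class_eq[of M \<Sigma>] gens_1[of \<Sigma>] by (metis image_eqI smul_1)

end


lemma frac_mult:
  assumes R: "is_subring R" and a: "fractional_ideal R a" and b: "fractional_ideal R b"
  shows "fractional_ideal R (ideal_mult a b)"
proof -
  have sm: "O_submodule R (ideal_mult a b)" by (rule imult_submod[OF frac_submod[OF b]])
  obtain x where x: "x \<in> a" "x \<noteq> 0" using frac_nonzero[OF a] by blast
  obtain y where y: "y \<in> b" "y \<noteq> 0" using frac_nonzero[OF b] by blast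
  have xy: "x * y \<in> ideal_mult a b" by (rule imult_mem[OF x(1) y(1)])
  have nz: "ideal_mult a b \<noteq> {0}"
  proof
    assume "ideal_mult a b = {0}"
    then have "x * y = 0" using xy by blast
    then show False using x(2) y(2) by simp
  qed
  obtain d where d: "d \<in> R" "d \<noteq> 0" "\<forall>x\<in>a. d * x \<in> R" using a unfolding fractional_ideal_def by blast
  obtain e where e: "e \<in> R" "e \<noteq> 0" "\<forall>x\<in>b. e * x \<in> R" using b unfolding fractional_ideal_def by blast
  have de: "(d * e) * z \<in> R" if "z \<in> ideal_mult a b" for z
    using that
  proof (rule imult_induct[where P="\<lambda>z. (d * e) * z \<in> R"])
    show "(d * e) * 0 \<in> R" using subring_0[OF R] by simp
    show "(d * e) * (u + v) \<in> R" if "(d * e) * u \<in> R" "(d * e) * v \<in> R" for u v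
      using that subring_add[OF R] by (simp add: distrib_left)
    show "(d * e) * (p * q) \<in> R" if "p \<in> a" "q \<in> b" for p q
    proof -
      have "(d * e) * (p * q) = (d * p) * (e * q)" by (simp add: ac_simps)
      moreover have "d * p \<in> R" "e * q \<in> R" using that d(3) e(3) by auto
      ultimately show ?thesis using subring_mult[OF R, of "d * p" "e * q"] by metis
    qed
  qed
  have de1: "d * e \<in> R" using d(1) e(1) subring_mult[OF R] by blast
  have de2: "d * e \<noteq> 0" using d(2) e(2) by simp
  show ?thesis unfolding fractional_ideal_def
    by (intro conjI sm nz bexI[of _ "d * e"] ballI de de1 de2)
qed

lemma imult_4': "ideal_mult (ideal_mult A B) (ideal_mult C D) = ideal_mult (ideal_mult A C) (ideal_mult B D)"
proof -
  have "ideal_mult (ideal_mult A B) (ideal_mult C D) = ideal_mult A (ideal_mult (ideal_mult B C) D)"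
    by (simp only: imult_assoc)
  also have "\<dots> = ideal_mult A (ideal_mult (ideal_mult C B) D)" by (simp only: imult_comm[of B C])
  also have "\<dots> = ideal_mult (ideal_mult A C) (ideal_mult B D)" by (simp only: imult_assoc)
  finally show ?thesis .
qed

lemma inv_mult:
  assumes R: "is_subring R" and a: "invertible_ideal R a" and b: "invertible_ideal R b"
  shows "invertible_ideal R (ideal_mult a b)"
proof -
  obtain N where N: "fractional_ideal R N" "ideal_mult a N = R" using a unfolding invertible_ideal_def by blast
  obtain N' where N': "fractional_ideal R N'" "ideal_mult b N' = R" using b unfolding invertible_ideal_def by blast
  have "ideal_mult (ideal_mult a b) (ideal_mult N N') = R"
    using imult_4'[of a b N N'] N N' RR[OF R] by simp
  then show ?thesis unfolding invertible_ideal_def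
    using frac_mult[OF R] inv_frac[OF a] inv_frac[OF b] N(1) N'(1) by blast
qed

lemma integral_mult:
  assumes R: "is_subring R" and a: "integral_ideal R a" and b: "integral_ideal R b"
  shows "integral_ideal R (ideal_mult a b)"
  unfolding integral_ideal_def
proof
  show "O_submodule R (ideal_mult a b)" by (rule imult_submod[OF integral_submod[OF b]])
  show "ideal_mult a b \<subseteq> R"
    by (rule imult_subset) (use a b R in \<open>auto simp: integral_ideal_def intro: subring_0 subring_add subring_mult\<close>)
qed

lemma iadd_mult:
  assumes R: "is_subring R" and a: "integral_ideal R a" and b: "integral_ideal R b" and m: "integral_ideal R m"
    and ca: "ideal_add a m = R" and cb: "ideal_add b m = R"
  shows "ideal_add (ideal_mult a b) m = R"
proof -
  note ie = iadd_eq_O[OF R integral_submod integral_sub integral_submod[OF m] integral_sub[OF m]]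
  obtain x y where xy: "x \<in> a" "y \<in> m" "x + y = 1" using ie[OF a a] ca by blast
  obtain x' y' where xy': "x' \<in> b" "y' \<in> m" "x' + y' = 1" using ie[OF b b] cb by blast
  have "(x + y) * (x' + y') = 1" using xy xy' by simp
  then have "x * x' + (x * y' + y * x' + y * y') = 1" by (simp add: algebra_simps)
  moreover have "x * x' \<in> ideal_mult a b" using xy xy' imult_mem by blast
  moreover have "x * y' + y * x' + y * y' \<in> m"
    using xy xy' a b integral_sub[OF a] integral_sub[OF b] integral_sub[OF m] integral_submod[OF m]
    by (intro submod_add[OF integral_submod[OF m]] submod_mult[OF integral_submod[OF m]] submod_mult'[OF integral_submod[OF m]]) auto
  ultimately show ?thesis using ie[OF integral_mult[OF R a b] integral_mult[OF R a b]] by blast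
qed

lemma J_mult:
  assumes R: "is_subring R" and m: "integral_ideal R m" and a: "a \<in> J_star R m" and b: "b \<in> J_star R m"
  shows "ideal_mult a b \<in> J_star R m"
proof -
  obtain a1 b1 where ab: "integral_ideal R a1" "integral_ideal R b1" "invertible_ideal R b1"
    "ideal_add a1 m = R" "ideal_add b1 m = R" "a = ideal_colon a1 b1"
    using a unfolding J_star_def coprime_to_def by blast
  obtain a2 b2 where ab2: "integral_ideal R a2" "integral_ideal R b2" "invertible_ideal R b2"
    "ideal_add a2 m = R" "ideal_add b2 m = R" "b = ideal_colon a2 b2"
    using b unfolding J_star_def coprime_to_def by blast
  obtain N where N: "fractional_ideal R N" "ideal_mult b1 N = R" using ab(3) unfolding invertible_ideal_def by blast
  obtain N2 where N2: "fractional_ideal R N2" "ideal_mult b2 N2 = R" using ab2(3) unfolding invertible_ideal_def by blast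
  have a_eq: "a = ideal_mult a1 N"
    using ab(6) colon_eq[OF R integral_submod[OF ab(1)] integral_submod[OF ab(2)] frac_submod[OF N(1)] N(2)] by simp
  have b_eq: "b = ideal_mult a2 N2"
    using ab2(6) colon_eq[OF R integral_submod[OF ab2(1)] integral_submod[OF ab2(2)] frac_submod[OF N2(1)] N2(2)] by simp
  have BB: "ideal_mult (ideal_mult b1 b2) (ideal_mult N N2) = R"
    using imult_4'[of b1 b2 N N2] N N2 RR[OF R] by simp
  have "ideal_mult a b = ideal_mult (ideal_mult a1 a2) (ideal_mult N N2)"
    unfolding a_eq b_eq by (rule imult_4')
  also have "\<dots> = ideal_colon (ideal_mult a1 a2) (ideal_mult b1 b2)"
    by (rule colon_eq[symmetric, OF R imult_submod[OF integral_submod[OF ab2(1)]] imult_submod[OF integral_submod[OF ab2(2)]]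
          imult_submod[OF frac_submod[OF N2(1)]] BB])
  finally have eq: "ideal_mult a b = ideal_colon (ideal_mult a1 a2) (ideal_mult b1 b2)" .
  have "coprime_to R m (ideal_mult a b)"
    unfolding coprime_to_def
    using integral_mult[OF R ab(1) ab2(1)] integral_mult[OF R ab(2) ab2(2)] inv_mult[OF R ab(3) ab2(3)]
      iadd_mult[OF R ab(1) ab2(1) m ab(4) ab2(4)] iadd_mult[OF R ab(2) ab2(2) m ab(5) ab2(5)] eq by blast
  moreover have "invertible_ideal R (ideal_mult a b)"
    using inv_mult[OF R] a b unfolding J_star_def by blast
  ultimately show ?thesis unfolding J_star_def by blast
qed


locale fr =
  fixes R I :: "'k::field_char_0 set" and F :: "'k set"
  assumes sr: "is_subring R" and Isub: "O_submodule R I" and IR: "I \<subseteq> R"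
    and finF: "finite F" and Fcov: "\<forall>x\<in>R. \<exists>y\<in>F. x - y \<in> I"
begin

definition cg :: "'k \<Rightarrow> 'k \<Rightarrow> bool" where "cg x y \<longleftrightarrow> x - y \<in> I"

lemma cg_refl: "cg x x" unfolding cg_def using submod_0[OF Isub] by simp
lemma cg_sym: "cg x y \<Longrightarrow> cg y x" unfolding cg_def using submod_uminus[OF Isub] by fastforce
lemma cg_trans: "cg x y \<Longrightarrow> cg y z \<Longrightarrow> cg x z"
  unfolding cg_def using submod_add[OF Isub, of "x - y" "y - z"] by simp
lemma cg_add: "cg x y \<Longrightarrow> cg x' y' \<Longrightarrow> cg (x + x') (y + y')"
  unfolding cg_def using submod_add[OF Isub, of "x - y" "x' - y'"] by (simp add: algebra_simps)
lemma cg_diff: "cg x y \<Longrightarrow> cg x' y' \<Longrightarrow> cg (x - x') (y - y')"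
  unfolding cg_def using submod_diff[OF Isub, of "x - y" "x' - y'"] by (simp add: algebra_simps)
lemma cg_lmult: "r \<in> R \<Longrightarrow> cg x y \<Longrightarrow> cg (r * x) (r * y)"
  unfolding cg_def using submod_mult[OF Isub, of r "x - y"] by (simp add: algebra_simps)
lemma cg_rmult: "r \<in> R \<Longrightarrow> cg x y \<Longrightarrow> cg (x * r) (y * r)"
  using cg_lmult by (simp add: mult.commute)
lemma cg_mult: "x \<in> R \<Longrightarrow> y' \<in> R \<Longrightarrow> cg x x' \<Longrightarrow> cg y y' \<Longrightarrow> cg (x * y) (x' * y')"
  using cg_trans[OF cg_lmult[of x y y'] cg_rmult[of y' x x']] by simp
lemma cg_0_mult: "r \<in> R \<Longrightarrow> cg x 0 \<Longrightarrow> cg (r * x) 0"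
  using cg_lmult[of r x 0] by simp
lemma cg_sum: "(\<And>i. i \<in> A \<Longrightarrow> cg (f i) (g i)) \<Longrightarrow> cg (sum f A) (sum g A)"
  by (induction A rule: infinite_finite_induct) (auto intro: cg_refl cg_add)

lemma cg_power: "x \<in> R \<Longrightarrow> y \<in> R \<Longrightarrow> cg x y \<Longrightarrow> cg (x ^ n) (y ^ n)"
proof (induction n)
  case 0 then show ?case by (simp add: cg_refl)
  case (Suc n) then show ?case using cg_mult[of x "y ^ n" y "x ^ n"] subring_power[OF sr] by (simp add: mult.commute)
qed

lemma R_power: "x \<in> R \<Longrightarrow> x ^ n \<in> R" by (rule subring_power[OF sr])
lemma R_mult: "x \<in> R \<Longrightarrow> y \<in> R \<Longrightarrow> x * y \<in> R" by (rule subring_mult[OF sr])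
lemma R_add: "x \<in> R \<Longrightarrow> y \<in> R \<Longrightarrow> x + y \<in> R" by (rule subring_add[OF sr])
lemma R_diff: "x \<in> R \<Longrightarrow> y \<in> R \<Longrightarrow> x - y \<in> R" by (rule subring_diff[OF sr])
lemma R_1: "1 \<in> R" by (rule subring_1[OF sr])
lemma R_0: "0 \<in> R" by (rule subring_0[OF sr])

lemma idem_power: "f \<in> R \<Longrightarrow> cg (f * f) f \<Longrightarrow> n \<ge> 1 \<Longrightarrow> cg (f ^ n) f"
proof (induction n)
  case 0 then show ?case by simp
next
  case (Suc n)
  show ?case
  proof (cases "n = 0")
    case True then show ?thesis by (simp add: cg_refl)
  next
    case False
    then have "cg (f ^ n) f" using Suc by simp
    then have "cg (f * f ^ n) (f * f)" using cg_lmult[OF Suc.prems(1)] by blast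
    then show ?thesis using cg_trans Suc.prems(2) by simp
  qed
qed

lemma FR1:
  assumes g: "g \<in> R"
  shows "\<exists>n\<ge>1. cg (g ^ (2 * n)) (g ^ n)"
proof -
  define rep where "rep k = (SOME y. y \<in> F \<and> g ^ k - y \<in> I)" for k :: nat
  have rep: "rep k \<in> F \<and> g ^ k - rep k \<in> I" for k
  proof -
    have "\<exists>y. y \<in> F \<and> g ^ k - y \<in> I" using Fcov R_power[OF g, of k] by blast
    then show ?thesis unfolding rep_def by (rule someI_ex)
  qed
  have "\<not> inj rep"
  proof
    assume inj: "inj rep"
    have "range rep \<subseteq> F" using rep by auto
    then have "finite (range rep)" using finF finite_subset by blast
    then have "finite (UNIV :: nat set)" using finite_imageD[of rep UNIV] inj by blast
    then show False by simp
  qed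
  then obtain i0 j0 where ij0: "i0 \<noteq> j0" "rep i0 = rep j0" unfolding inj_def by blast
  have c: "cg (g ^ i0) (g ^ j0)"
  proof -
    have "(g ^ i0 - rep i0) - (g ^ j0 - rep j0) \<in> I" using rep submod_diff[OF Isub] by blast
    then show ?thesis unfolding cg_def using ij0(2) by simp
  qed
  obtain i j where ij: "i < j" "cg (g ^ i) (g ^ j)"
  proof (cases "i0 < j0")
    case True then show ?thesis using that c by blast
  next
    case False then have "j0 < i0" using ij0(1) by simp
    then show ?thesis using that cg_sym[OF c] by blast
  qed
  define p where "p = j - i"
  have p: "p \<ge> 1" using ij unfolding p_def by simp
  have step: "cg (g ^ k) (g ^ (k + p))" if "k \<ge> i" for k
  proof -
    have "cg (g ^ (k - i) * g ^ i) (g ^ (k - i) * g ^ j)" by (rule cg_lmult[OF R_power[OF g] ij(2)])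
    moreover have "g ^ (k - i) * g ^ i = g ^ k" "g ^ (k - i) * g ^ j = g ^ (k + p)"
      using that ij(1) by (simp_all add: power_add[symmetric] p_def)
    ultimately show ?thesis by simp
  qed
  have iter: "cg (g ^ k) (g ^ (k + q * p))" if "k \<ge> i" for k q
  proof (induction q)
    case 0 then show ?case by (simp add: cg_refl)
  next
    case (Suc q)
    have "cg (g ^ (k + q * p)) (g ^ (k + q * p + p))" using step[of "k + q * p"] that by simp
    then have "cg (g ^ k) (g ^ (k + q * p + p))" using cg_trans[OF Suc.IH] by blast
    moreover have "k + Suc q * p = k + q * p + p" by simp
    ultimately show ?case by metis
  qed
  define n where "n = (i + 1) * p"
  have n1: "n \<ge> 1" using p unfolding n_def by simp
  have "(i + 1) * 1 \<le> (i + 1) * p" using p by (rule mult_le_mono2)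
  then have "n \<ge> i" unfolding n_def by simp
  then have "cg (g ^ n) (g ^ (n + (i + 1) * p))" using iter by blast
  moreover have "n + (i + 1) * p = 2 * n" unfolding n_def by simp
  ultimately have "cg (g ^ (2 * n)) (g ^ n)" using cg_sym by metis
  then show ?thesis using n1 by blast
qed

lemma geom: "(1 - w) * (\<Sum>i<n. w ^ i) = 1 - w ^ n" for w :: 'k
  by (rule one_diff_power_eq[symmetric])

lemma FR2:
  fixes k :: nat
  shows "\<And>a E b. (\<forall>i<k. a i \<in> R) \<Longrightarrow> E \<in> R \<Longrightarrow> cg (E * E) E \<Longrightarrow> b \<in> R \<Longrightarrow> cg ((\<Sum>i<k. a i) * b) E \<Longrightarrow>
    \<exists>e c. (\<forall>i<k. e i \<in> R \<and> c i \<in> R \<and> cg (e i * e i) (e i) \<and> cg (a i * c i) (e i) \<and> cg (e i * E) (e i)) \<and>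
      (\<forall>i<k. \<forall>j<k. i \<noteq> j \<longrightarrow> cg (e i * e j) 0) \<and> cg (\<Sum>i<k. e i) E"
proof (induction k)
  case 0
  then have "cg 0 E" by simp
  then show ?case by simp
next
  case (Suc k a E b)
  define S where "S = (\<Sum>i<k. a i)"
  define g where "g = a k"
  have SR: "S \<in> R" unfolding S_def using Suc.prems(1) by (intro subring_sum[OF sr]) auto
  have gR: "g \<in> R" unfolding g_def using Suc.prems(1) by auto
  have ER: "E \<in> R" and bR: "b \<in> R" and EE: "cg (E * E) E" using Suc.prems by auto
  have hyp: "cg ((S + g) * b) E" using Suc.prems(5) unfolding S_def g_def by (simp add: add.commute)
  obtain n where n: "n \<ge> 1" "cg (g ^ (2 * n)) (g ^ n)" using FR1[OF gR] by blast
  define f where "f = g ^ n"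
  define bg where "bg = g ^ (2 * n - 1)"
  have fR: "f \<in> R" and bgR: "bg \<in> R" unfolding f_def bg_def using R_power[OF gR] by auto
  have ff: "cg (f * f) f" using n(2) unfolding f_def by (simp add: power_add[symmetric] mult_2)
  have gbg: "cg (g * bg) f" using n unfolding f_def bg_def
    by (metis One_nat_def Suc_pred mult_pos_pos pos2 power_Suc zero_less_one_class.zero_le_one less_le_trans not_one_le_zero linorder_not_le)
  define E' where "E' = E * (1 - f)"
  have E'R: "E' \<in> R" unfolding E'_def using ER fR R_1 by (intro R_mult R_diff)
  have omf: "cg ((1 - f) * (1 - f)) (1 - f)"
  proof -
    have "(1 - f) * (1 - f) = (1 - f) - (f - f * f)" by (simp add: algebra_simps)
    moreover have "cg (f - f * f) 0" using ff cg_sym unfolding cg_def by (metis diff_0_right minus_diff_eq submod_uminus[OF Isub])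
    ultimately show ?thesis using cg_diff[OF cg_refl, of "f - f * f" 0 "1 - f"] by simp
  qed
  have fomf: "cg (f * (1 - f)) 0"
    using ff unfolding cg_def by (metis diff_0_right right_diff_distrib mult_1_right minus_diff_eq submod_uminus[OF Isub])
  have E'E': "cg (E' * E') E'"
    using cg_mult[OF R_mult[OF ER ER] R_diff[OF R_1 fR] EE omf] unfolding E'_def by (simp add: ac_simps)
  define z where "z = g * (1 - f)"
  have zR: "z \<in> R" unfolding z_def using gR fR R_1 by (intro R_mult R_diff)
  have omfn: "cg ((1 - f) ^ n) (1 - f)" by (rule idem_power[OF R_diff[OF R_1 fR] omf n(1)])
  have zn: "cg (z ^ n) 0"
  proof -
    have "z ^ n = f * (1 - f) ^ n" unfolding z_def f_def by (simp add: power_mult_distrib)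
    moreover have "cg (f * (1 - f) ^ n) (f * (1 - f))" by (rule cg_lmult[OF fR omfn])
    ultimately show ?thesis using cg_trans fomf by simp
  qed
  define w where "w = z * b"
  have wR: "w \<in> R" unfolding w_def using zR bR by (rule R_mult)
  have wn: "cg (w ^ n) 0" unfolding w_def power_mult_distrib
    using cg_rmult[OF R_power[OF bR] zn] by simp
  define gs where "gs = (\<Sum>i<n. w ^ i)"
  have gsR: "gs \<in> R" unfolding gs_def using R_power[OF wR] by (intro subring_sum[OF sr])
  define b' where "b' = b * (1 - f) * E' * gs"
  have b'R: "b' \<in> R" unfolding b'_def using bR fR E'R gsR R_1 by (intro R_mult R_diff)
  have c1: "cg (S * b * (1 - f) + w) E'"
  proof -
    have "cg ((S + g) * b * (1 - f)) (E * (1 - f))" by (rule cg_rmult[OF R_diff[OF R_1 fR] hyp])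
    moreover have "(S + g) * b * (1 - f) = S * b * (1 - f) + w" unfolding w_def z_def by (simp add: algebra_simps)
    ultimately show ?thesis unfolding E'_def by simp
  qed
  have c1': "cg (S * b * (1 - f)) (E' - w)" using cg_diff[OF c1 cg_refl[of w]] by simp
  have c2: "cg (S * b') E'"
  proof -
    have "cg (S * b * (1 - f) * (E' * gs)) ((E' - w) * (E' * gs))"
      by (rule cg_rmult[OF R_mult[OF E'R gsR] c1'])
    then have h1: "cg (S * b') ((E' * E') * gs - w * E' * gs)" unfolding b'_def by (simp add: algebra_simps)
    have h2: "cg ((E' * E') * gs - w * E' * gs) (E' * gs - w * E' * gs)"
      by (rule cg_diff[OF cg_rmult[OF gsR E'E'] cg_refl])
    have "E' * gs - w * E' * gs = E' * ((1 - w) * gs)" by (simp add: algebra_simps)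
    also have "\<dots> = E' - E' * w ^ n" unfolding gs_def geom by (simp add: algebra_simps)
    finally have h3: "E' * gs - w * E' * gs = E' - E' * w ^ n" .
    have h4: "cg (E' - E' * w ^ n) (E' - 0)" by (rule cg_diff[OF cg_refl cg_0_mult[OF E'R wn]])
    show ?thesis using cg_trans[OF h1 h2] h3 h4 cg_trans by simp
  qed
  have Sa: "\<forall>i<k. a i \<in> R" using Suc.prems(1) by auto
  have c2': "cg ((\<Sum>i<k. a i) * b') E'" using c2 unfolding S_def .
  obtain e c where ec: "\<forall>i<k. e i \<in> R \<and> c i \<in> R \<and> cg (e i * e i) (e i) \<and> cg (a i * c i) (e i) \<and> cg (e i * E') (e i)"
    "\<forall>i<k. \<forall>j<k. i \<noteq> j \<longrightarrow> cg (e i * e j) 0" "cg (\<Sum>i<k. e i) E'"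
    using Suc.IH[OF Sa E'R E'E' b'R c2'] by blast
  define e2 where "e2 = e(k := E * f)"
  define c2 where "c2 = c(k := E * bg)"
  have EfR: "E * f \<in> R" using ER fR by (rule R_mult)
  have E'E: "cg (E' * E) E'" using cg_rmult[OF R_diff[OF R_1 fR] EE] unfolding E'_def by (simp add: ac_simps)
  have old: "cg (e i * E) (e i)" if "i < k" for i
  proof -
    have eR: "e i \<in> R" using ec(1) that by blast
    have h0: "cg (e i) (e i * E')" using ec(1) that cg_sym by blast
    have h1: "cg (e i * E) (e i * E' * E)" by (rule cg_rmult[OF ER h0])
    have h2: "cg (e i * (E' * E)) (e i * E')" by (rule cg_lmult[OF eR E'E])
    have h3: "cg (e i * E') (e i)" using ec(1) that by blast
    show ?thesis using cg_trans[OF h1 cg_trans[OF _ h3]] h2 by (simp add: mult.assoc)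
  qed
  have orth: "cg (e j * (E * f)) 0" if "j < k" for j
  proof -
    have eR: "e j \<in> R" using ec(1) that by blast
    have h0: "cg (e j) (e j * E')" using ec(1) that cg_sym by blast
    have h1: "cg (e j * (E * f)) (e j * E' * (E * f))" by (rule cg_rmult[OF EfR h0])
    have eq: "e j * E' * (E * f) = (e j * E * E) * (f * (1 - f))" unfolding E'_def by (simp add: ac_simps)
    have h2: "cg ((e j * E * E) * (f * (1 - f))) 0"
      by (rule cg_0_mult[OF R_mult[OF R_mult[OF eR ER] ER] fomf])
    have "cg (e j * E' * (E * f)) 0" unfolding eq by (rule h2)
    then show ?thesis using cg_trans[OF h1] by blast
  qed
  have P1: "\<forall>i<Suc k. e2 i \<in> R \<and> c2 i \<in> R \<and> cg (e2 i * e2 i) (e2 i) \<and> cg (a i * c2 i) (e2 i) \<and> cg (e2 i * E) (e2 i)"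
  proof (intro allI impI)
    fix i assume i: "i < Suc k"
    show "e2 i \<in> R \<and> c2 i \<in> R \<and> cg (e2 i * e2 i) (e2 i) \<and> cg (a i * c2 i) (e2 i) \<and> cg (e2 i * E) (e2 i)"
    proof (cases "i = k")
      case True
      have "cg ((E * E) * (f * f)) (E * f)" by (rule cg_mult[OF R_mult[OF ER ER] fR EE ff])
      then have t1: "cg ((E * f) * (E * f)) (E * f)" by (simp add: ac_simps)
      have "cg (E * (g * bg)) (E * f)" by (rule cg_lmult[OF ER gbg])
      then have t2: "cg (a k * (E * bg)) (E * f)" unfolding g_def by (simp add: ac_simps)
      have "cg ((E * E) * f) (E * f)" by (rule cg_rmult[OF fR EE])
      then have t3: "cg ((E * f) * E) (E * f)" by (simp add: ac_simps)
      show ?thesis using True t1 t2 t3 EfR R_mult[OF ER bgR] unfolding e2_def c2_def by simp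
    next
      case False
      then have "i < k" using i by simp
      then show ?thesis using False ec(1) old unfolding e2_def c2_def by simp
    qed
  qed
  have P2: "\<forall>i<Suc k. \<forall>j<Suc k. i \<noteq> j \<longrightarrow> cg (e2 i * e2 j) 0"
  proof (intro allI impI)
    fix i j assume ij: "i < Suc k" "j < Suc k" "i \<noteq> j"
    show "cg (e2 i * e2 j) 0"
    proof (cases "i = k")
      case True
      then have "j < k" using ij by simp
      then show ?thesis using True orth[of j] ij(3) unfolding e2_def by (simp add: mult.commute)
    next
      case False
      then have ik: "i < k" using ij by simp
      show ?thesis
      proof (cases "j = k")
        case True then show ?thesis using ik orth[of i] unfolding e2_def by simp
      next
        case False then show ?thesis using ik ij ec(2) \<open>i \<noteq> k\<close> unfolding e2_def by simp
      qed
    qed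
  qed
  have "(\<Sum>i<Suc k. e2 i) = (\<Sum>i<k. e i) + E * f" unfolding e2_def by simp
  moreover have "cg ((\<Sum>i<k. e i) + E * f) (E' + E * f)" by (rule cg_add[OF ec(3) cg_refl])
  moreover have "E' + E * f = E" unfolding E'_def by (simp add: algebra_simps)
  ultimately have P3: "cg (\<Sum>i<Suc k. e2 i) E" by simp
  show ?case using P1 P2 P3 by blast
qed

end


definition qscale :: "rat \<Rightarrow> 'k::field_char_0 \<Rightarrow> 'k" where "qscale q x = of_rat q * x"

lemma vs: "vector_space (qscale :: rat \<Rightarrow> 'k::field_char_0 \<Rightarrow> 'k)"
  by unfold_locales (simp_all add: qscale_def algebra_simps of_rat_add of_rat_mult)

abbreviation "qdep \<equiv> module.dependent (qscale :: rat \<Rightarrow> 'k::field_char_0 \<Rightarrow> 'k)"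
abbreviation "qspan \<equiv> module.span (qscale :: rat \<Rightarrow> 'k::field_char_0 \<Rightarrow> 'k)"

lemma qmod: "module (qscale :: rat \<Rightarrow> 'k::field_char_0 \<Rightarrow> 'k)"
  using vs by (simp add: module_iff_vector_space)

lemma indep_iff: "\<not> qdep S \<longleftrightarrow> (\<forall>t u. finite t \<and> t \<subseteq> S \<and> (\<Sum>v\<in>t. of_rat (u v) * v) = (0::'k::field_char_0) \<longrightarrow> (\<forall>v\<in>t. u v = 0))"
  unfolding module.dependent_explicit[OF qmod] qscale_def by blast

lemma reindex_sum:
  assumes "inj_on w I" "t \<subseteq> w ` I" "finite I"
  shows "(\<Sum>i\<in>I. if w i \<in> t then f (w i) else 0) = (\<Sum>v\<in>t. f v)"
proof -
  have "(\<Sum>i\<in>I. if w i \<in> t then f (w i) else 0) = (\<Sum>i\<in>{i\<in>I. w i \<in> t}. f (w i))"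
    using assms(3) by (simp add: sum.inter_filter)
  also have "\<dots> = (\<Sum>v\<in>w ` {i\<in>I. w i \<in> t}. f v)"
    using assms(1) by (subst sum.reindex) (auto intro: inj_on_subset)
  also have "w ` {i\<in>I. w i \<in> t} = t" using assms(2) by auto
  finally show ?thesis .
qed

lemma two_point_sum:
  fixes b :: "nat \<Rightarrow> 'k::field_char_0"
  assumes "i \<in> I" "j \<in> I" "i \<noteq> j" "finite I"
  shows "(\<Sum>l\<in>I. of_rat (if l = i then 1 else if l = j then -1 else 0) * b l) = b i - b j"
proof -
  have "(\<Sum>l\<in>I. of_rat (if l = i then 1 else if l = j then -1 else 0) * b l)
      = (\<Sum>l\<in>I. (if l = i then b l else 0) - (if l = j then b l else 0))"
    using assms(3) by (intro sum.cong) auto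
  also have "\<dots> = b i - b j" using assms by (simp add: sum_subtractf sum.delta)
  finally show ?thesis .
qed

lemma two_point_sum_int:
  fixes b :: "nat \<Rightarrow> 'k::field_char_0"
  assumes "i \<in> I" "j \<in> I" "i \<noteq> j" "finite I"
  shows "(\<Sum>l\<in>I. of_int (if l = i then 1 else if l = j then -1 else 0) * b l) = b i - b j"
proof -
  have "(\<Sum>l\<in>I. of_int (if l = i then 1 else if l = j then -1 else 0) * b l)
      = (\<Sum>l\<in>I. (if l = i then b l else 0) - (if l = j then b l else 0))"
    using assms(3) by (intro sum.cong) auto
  also have "\<dots> = b i - b j" using assms by (simp add: sum_subtractf sum.delta)
  finally show ?thesis .
qed

lemma basis_inj: fixes b :: "nat \<Rightarrow> 'k::field_char_0" assumes "Q_basis b n" shows "inj_on b {..<n}"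
proof (rule inj_onI, rule ccontr)
  fix i j assume ij: "i \<in> {..<n}" "j \<in> {..<n}" "b i = b j" "i \<noteq> j"
  define c where "c l = (if l = i then 1 else if l = j then -1 else (0::rat))" for l
  have "(\<Sum>l<n. of_rat (c l) * b l) = 0" unfolding c_def using two_point_sum[OF ij(1,2,4), where b=b] ij(3) by simp
  then have "c i = 0" using assms ij unfolding Q_basis_def by blast
  then show False unfolding c_def by simp
qed

lemma basis_indep: fixes b :: "nat \<Rightarrow> 'k::field_char_0" assumes "Q_basis b n" shows "\<not> qdep (b ` {..<n})"
  unfolding indep_iff
proof (intro allI impI ballI)
  fix t u v assume tu: "finite t \<and> t \<subseteq> b ` {..<n} \<and> (\<Sum>v\<in>t. of_rat (u v) * v) = 0" and v: "v \<in> t"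
  define c where "c i = (if b i \<in> t then u (b i) else 0)" for i
  have "(\<Sum>i<n. of_rat (c i) * b i) = (\<Sum>i<n. if b i \<in> t then of_rat (u (b i)) * b i else 0)"
    unfolding c_def by (intro sum.cong) auto
  also have "\<dots> = (\<Sum>v\<in>t. of_rat (u v) * v)"
    by (rule reindex_sum[OF basis_inj[OF assms]]) (use tu in auto)
  also have "\<dots> = 0" using tu by simp
  finally have "\<forall>i<n. c i = 0" using assms unfolding Q_basis_def by blast
  moreover obtain i where "i < n" "v = b i" using tu v by blast
  ultimately show "u v = 0" unfolding c_def using v by auto
qed

lemma basis_span: fixes b :: "nat \<Rightarrow> 'k::field_char_0" assumes "Q_basis b n" shows "qspan (b ` {..<n}) = UNIV"
proof -
  have "x \<in> qspan (b ` {..<n})" for x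
  proof -
    obtain c where c: "x = (\<Sum>i<n. of_rat (c i) * b i)" using assms unfolding Q_basis_def by blast
    have "of_rat (c i) * b i \<in> qspan (b ` {..<n})" if "i < n" for i
      using module.span_scale[OF qmod module.span_base[OF qmod, of "b i" "b ` {..<n}"], of "c i"] that
      unfolding qscale_def by simp
    then show ?thesis unfolding c by (intro module.span_sum[OF qmod]) auto
  qed
  then show ?thesis by auto
qed

lemma indep_bound:
  fixes b :: "nat \<Rightarrow> 'k::field_char_0" and S :: "'k set"
  assumes "Q_basis b n" "\<not> qdep S"
  shows "finite S \<and> card S \<le> n"
proof -
  have "finite S \<and> card S \<le> card (b ` {..<n})"
    using vector_space.independent_span_bound[OF vs, of "b ` {..<n}" S] assms basis_span by auto
  then show ?thesis using card_image[OF basis_inj[OF assms(1)]] by simp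
qed

lemma nf_degree_eq:
  fixes b :: "nat \<Rightarrow> 'k::field_char_0"
  assumes "Q_basis b n"
  shows "nf_degree TYPE('k::field_char_0) = n"
proof -
  have "(THE n. \<exists>b :: nat \<Rightarrow> 'k. Q_basis b n) = n"
  proof (rule the_equality)
    show "\<exists>b :: nat \<Rightarrow> 'k. Q_basis b n" using assms by blast
    fix n' assume "\<exists>b :: nat \<Rightarrow> 'k. Q_basis b n'"
    then obtain b' :: "nat \<Rightarrow> 'k" where b': "Q_basis b' n'" by blast
    have "card (b' ` {..<n'}) \<le> n" using indep_bound[OF assms basis_indep[OF b']] by blast
    moreover have "card (b ` {..<n}) \<le> n'" using indep_bound[OF b' basis_indep[OF assms]] by blast
    ultimately show "n' = n" using card_image[OF basis_inj[OF assms]] card_image[OF basis_inj[OF b']] by simp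
  qed
  then show ?thesis unfolding nf_degree_def by simp
qed

lemma common_denom:
  fixes u :: "'a \<Rightarrow> rat"
  assumes "finite A"
  shows "\<exists>D::int. D > 0 \<and> (\<forall>v\<in>A. \<exists>z::int. of_int D * u v = of_int z)"
  using assms
proof (induction A rule: finite_induct)
  case empty then show ?case by (intro exI[of _ 1]) simp
next
  case (insert a A)
  then obtain D where D: "D > 0" "\<forall>v\<in>A. \<exists>z::int. of_int D * u v = of_int z" by blast
  obtain p q where pq: "quotient_of (u a) = (p, q)" by (cases "quotient_of (u a)")
  have q: "q > 0" using quotient_of_denom_pos[OF pq] .
  have ua: "u a = of_int p / of_int q" using quotient_of_div[OF pq] .
  have "\<forall>v\<in>insert a A. \<exists>z::int. of_int (D * q) * u v = of_int z"
  proof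
    fix v assume "v \<in> insert a A"
    then show "\<exists>z::int. of_int (D * q) * u v = of_int z"
    proof
      assume "v = a"
      then show ?thesis using q ua by (intro exI[of _ "D * p"]) simp
    next
      assume "v \<in> A"
      then obtain z where "of_int D * u v = of_int z" using D by blast
      then show ?thesis by (intro exI[of _ "q * z"]) (simp add: algebra_simps)
    qed
  qed
  then show ?case using D q by (intro exI[of _ "D * q"]) simp
qed

lemma Zindep_inj: fixes w :: "nat \<Rightarrow> 'k::field_char_0" assumes "Z_indep w n" shows "inj_on w {..<n}"
proof (rule inj_onI, rule ccontr)
  fix i j assume ij: "i \<in> {..<n}" "j \<in> {..<n}" "w i = w j" "i \<noteq> j"
  define c where "c l = (if l = i then 1 else if l = j then -1 else (0::int))" for l
  have "(\<Sum>l<n. of_int (c l) * w l) = 0" unfolding c_def using two_point_sum_int[OF ij(1,2,4), where b=w] ij(3) by simp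
  then have "c i = 0" using assms ij unfolding Z_indep_def by blast
  then show False unfolding c_def by simp
qed

lemma Zindep_indep: fixes w :: "nat \<Rightarrow> 'k::field_char_0" assumes "Z_indep w n" shows "\<not> qdep (w ` {..<n})"
  unfolding indep_iff
proof (intro allI impI ballI)
  fix t u v assume tu: "finite t \<and> t \<subseteq> w ` {..<n} \<and> (\<Sum>v\<in>t. of_rat (u v) * v) = 0" and v: "v \<in> t"
  obtain D :: int where D: "D > 0" "\<forall>v\<in>t. \<exists>z::int. of_int D * u v = of_int z" using common_denom tu by blast
  define z where "z v = (SOME z::int. of_int D * u v = of_int z)" for v
  have z: "of_int D * u v = of_int (z v)" if "v \<in> t" for v
    unfolding z_def using D(2) that by (metis (mono_tags, lifting) someI_ex)
  have "(\<Sum>v\<in>t. of_int (z v) * v) = (\<Sum>v\<in>t. of_rat (of_int D * u v) * v)"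
    using z by (intro sum.cong) auto
  also have "\<dots> = of_int D * (\<Sum>v\<in>t. of_rat (u v) * v)"
    by (simp add: sum_distrib_left of_rat_mult mult.assoc)
  also have "\<dots> = 0" using tu by simp
  finally have z0: "(\<Sum>v\<in>t. of_int (z v) * (v::'k)) = 0" .
  define c where "c i = (if w i \<in> t then z (w i) else 0)" for i
  have "(\<Sum>i<n. of_int (c i) * w i) = (\<Sum>i<n. if w i \<in> t then of_int (z (w i)) * w i else 0)"
    unfolding c_def by (intro sum.cong) auto
  also have "\<dots> = (\<Sum>v\<in>t. of_int (z v) * v)"
    by (rule reindex_sum[OF Zindep_inj[OF assms]]) (use tu in auto)
  finally have "\<forall>i<n. c i = 0" using assms z0 unfolding Z_indep_def by auto
  moreover obtain i where "i < n" "v = w i" using tu v by blast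
  ultimately have "z v = 0" unfolding c_def using v by auto
  then have "of_int D * u v = 0" using z[OF v] by simp
  then show "u v = 0" using D(1) by simp
qed

lemma order_full:
  assumes nf: "number_field TYPE('k::field_char_0)" and R: "is_order (R :: 'k set)"
  shows "\<exists>d::int. d \<noteq> 0 \<and> of_int d * y \<in> R"
proof -
  obtain n b where b: "Q_basis (b :: nat \<Rightarrow> 'k) n" using nf unfolding number_field_def by blast
  have nd: "nf_degree TYPE('k) = n" by (rule nf_degree_eq[OF b])
  obtain w where w: "\<forall>i<n. w i \<in> R" "Z_indep w n" "R = Z_span w n" using R nd unfolding is_order_def by auto
  have sr: "is_subring R" using R unfolding is_order_def by blast
  define W where "W = w ` {..<n}"
  have indW: "\<not> qdep W" unfolding W_def by (rule Zindep_indep[OF w(2)])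
  have cardW: "card W = n" unfolding W_def using card_image[OF Zindep_inj[OF w(2)]] by simp
  have finW: "finite W" unfolding W_def by simp
  have yspan: "y \<in> qspan W"
  proof (rule ccontr)
    assume ny: "y \<notin> qspan W"
    then have "\<not> qdep (insert y W)" using vector_space.independent_insertI[OF vs ny indW] by simp
    then have "card (insert y W) \<le> n" using indep_bound[OF b] by blast
    moreover have "y \<notin> W" using ny module.span_base[OF qmod, of y W] by blast
    ultimately show False using cardW finW by simp
  qed
  then obtain u where u: "y = (\<Sum>v\<in>W. of_rat (u v) * v)"
    using module.span_finite[OF qmod finW] unfolding qscale_def by auto
  obtain D :: int where D: "D > 0" "\<forall>v\<in>W. \<exists>z::int. of_int D * u v = of_int z" using common_denom[OF finW] by blast
  have "of_int D * y = (\<Sum>v\<in>W. of_rat (of_int D * u v) * v)"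
    unfolding u by (simp add: sum_distrib_left of_rat_mult mult.assoc)
  also have "\<dots> \<in> R"
  proof (rule subring_sum[OF sr])
    fix v assume v: "v \<in> W"
    then obtain z where "of_int D * u v = of_int z" using D by blast
    moreover have "v \<in> R" using v w(1) unfolding W_def by auto
    ultimately show "of_rat (of_int D * u v) * v \<in> R" using subring_mult[OF sr subring_of_int[OF sr]] by simp
  qed
  finally show ?thesis using D(1) by (intro exI[of _ D]) simp
qed


lemma alg_rel:
  assumes nf: "number_field TYPE('k::field_char_0)"
  shows "\<exists>(c :: nat \<Rightarrow> rat) n. (\<exists>i\<le>n. c i \<noteq> 0) \<and> (\<Sum>i\<le>n. of_rat (c i) * y ^ i) = (0::'k)"
proof -
  obtain n b where b: "Q_basis (b :: nat \<Rightarrow> 'k) n" using nf unfolding number_field_def by blast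
  show ?thesis
  proof (cases "inj_on (\<lambda>i. y ^ i) {..n}")
    case False
    then obtain i j where ij: "i \<in> {..n}" "j \<in> {..n}" "i \<noteq> j" "y ^ i = y ^ j" unfolding inj_on_def by blast
    define c where "c l = (if l = i then 1 else if l = j then -1 else (0::rat))" for l
    have "(\<Sum>l\<in>{0..n}. of_rat (c l) * y ^ l) = y ^ i - y ^ j"
      unfolding c_def using two_point_sum[of i "{0..n}" j "\<lambda>l. y ^ l"] ij by auto
    then have z: "(\<Sum>l\<le>n. of_rat (c l) * y ^ l) = 0" using ij(4) by (simp add: atMost_atLeast0)
    have "c i \<noteq> 0" unfolding c_def by simp
    then show ?thesis using z ij(1) by blast
  next
    case True
    define S where "S = (\<lambda>i. y ^ i) ` {..n}"
    have cS: "card S = Suc n" unfolding S_def using card_image[OF True] by simp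
    have "qdep S"
    proof (rule ccontr)
      assume "\<not> qdep S"
      then have "card S \<le> n" using indep_bound[OF b, of S] by blast
      then show False using cS by simp
    qed
    then have "\<exists>t u. finite t \<and> t \<subseteq> S \<and> (\<Sum>v\<in>t. qscale (u v) v) = 0 \<and> (\<exists>v\<in>t. u v \<noteq> 0)"
      by (simp only: module.dependent_explicit[OF qmod])
    then obtain t u where tu: "finite t" "t \<subseteq> S" "(\<Sum>v\<in>t. of_rat (u v) * v) = 0" "\<exists>v\<in>t. u v \<noteq> 0"
      unfolding qscale_def by blast
    define c where "c i = (if y ^ i \<in> t then u (y ^ i) else 0)" for i
    have "(\<Sum>i\<le>n. of_rat (c i) * y ^ i) = (\<Sum>i\<le>n. if y ^ i \<in> t then of_rat (u (y ^ i)) * y ^ i else 0)"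
      unfolding c_def by (intro sum.cong) auto
    also have "\<dots> = (\<Sum>v\<in>t. of_rat (u v) * v)"
      by (rule reindex_sum[OF True]) (use tu in \<open>auto simp: S_def\<close>)
    also have "\<dots> = 0" by (rule tu(3))
    finally have z: "(\<Sum>i\<le>n. of_rat (c i) * y ^ i) = 0" .
    obtain v where v: "v \<in> t" "u v \<noteq> 0" using tu by blast
    then obtain i where i: "i \<le> n" "v = y ^ i" using tu(2) unfolding S_def by blast
    have "c i \<noteq> 0" unfolding c_def using v i by simp
    then show ?thesis using z i by blast
  qed
qed

lemma emb_of_rat: "real_embedding \<rho> \<Longrightarrow> \<rho> (of_rat q) = of_rat q"
proof -
  assume r: "real_embedding \<rho>"
  obtain p d where pd: "quotient_of q = (p, d)" by (cases "quotient_of q")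
  have d: "d > 0" using quotient_of_denom_pos[OF pd] .
  have q: "q = of_int p / of_int d" using quotient_of_div[OF pd] .
  have "\<rho> (of_rat q) = \<rho> (of_int p / of_int d)" unfolding q by (simp add: of_rat_divide)
  also have "\<dots> = of_int p / of_int d" using d emb_divide[OF r] emb_of_int[OF r] by simp
  also have "\<dots> = of_rat q" unfolding q by (simp add: of_rat_divide)
  finally show ?thesis .
qed

lemma emb_sum: "real_embedding \<rho> \<Longrightarrow> \<rho> (sum f A) = (\<Sum>i\<in>A. \<rho> (f i))"
  by (induction A rule: infinite_finite_induct) (simp_all add: emb_0 emb_add)

lemma emb_power: "real_embedding \<rho> \<Longrightarrow> \<rho> (x ^ n) = \<rho> x ^ n"
  by (induction n) (simp_all add: emb_1 emb_mult)

lemma emb_values_finite: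
  assumes nf: "number_field TYPE('k::field_char_0)"
  shows "finite {\<rho> (y::'k) | \<rho>. real_embedding \<rho>}"
proof -
  obtain c n where cn: "\<exists>i\<le>n. c i \<noteq> 0" "(\<Sum>i\<le>n. of_rat (c i) * y ^ i) = (0::'k)"
    using alg_rel[OF nf] by blast
  define P :: "real poly" where "P = (\<Sum>i\<le>n. monom (of_rat (c i)) i)"
  have Pz: "poly P x = (\<Sum>i\<le>n. of_rat (c i) * x ^ i)" for x
    unfolding P_def by (simp add: poly_sum poly_monom)
  obtain i where i: "i \<le> n" "c i \<noteq> 0" using cn by blast
  have "coeff P i = of_rat (c i)" unfolding P_def coeff_sum coeff_monom using i by (simp add: sum.delta)
  then have P0: "P \<noteq> 0" using i by auto
  have "{\<rho> y | \<rho>. real_embedding \<rho>} \<subseteq> {x. poly P x = 0}"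
  proof
    fix x assume "x \<in> {\<rho> y | \<rho>. real_embedding \<rho>}"
    then obtain \<rho> where r: "real_embedding \<rho>" "x = \<rho> y" by blast
    have "\<rho> (\<Sum>i\<le>n. of_rat (c i) * y ^ i) = (\<Sum>i\<le>n. of_rat (c i) * x ^ i)"
      using r by (simp add: emb_sum emb_mult emb_of_rat emb_power)
    then show "x \<in> {x. poly P x = 0}" using cn(2) emb_0[OF r(1)] Pz by simp
  qed
  then show ?thesis using poly_roots_finite[OF P0] finite_subset by blast
qed

lemma emb_bound:
  assumes nf: "number_field TYPE('k::field_char_0)"
  shows "\<exists>B::int. \<forall>\<rho>. real_embedding \<rho> \<longrightarrow> \<bar>\<rho> (y::'k)\<bar> < of_int B"
proof -
  define V where "V = {\<rho> y | \<rho>. real_embedding \<rho>}"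
  have fV: "finite V" unfolding V_def by (rule emb_values_finite[OF nf])
  define M where "M = Max (insert 0 (abs ` V))"
  have "\<forall>v\<in>V. \<bar>v\<bar> \<le> M" unfolding M_def using fV by (intro ballI Max_ge) auto
  then have "\<forall>\<rho>. real_embedding \<rho> \<longrightarrow> \<bar>\<rho> y\<bar> < of_int (\<lceil>M\<rceil> + 1)"
  proof (intro allI impI)
    fix \<rho> :: "'k \<Rightarrow> real" assume "\<forall>v\<in>V. \<bar>v\<bar> \<le> M" "real_embedding \<rho>"
    then have "\<bar>\<rho> y\<bar> \<le> M" unfolding V_def by blast
    moreover have "M \<le> of_int \<lceil>M\<rceil>" by (rule le_of_int_ceiling)
    ultimately show "\<bar>\<rho> y\<bar> < of_int (\<lceil>M\<rceil> + 1)" by linarith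
  qed
  then show ?thesis by blast
qed


lemma level_idl: "level_datum R m \<Sigma> \<Longrightarrow> idl R m"
  unfolding level_datum_def is_order_def integral_ideal_def idl_def by blast
lemma level_sr: "level_datum R m \<Sigma> \<Longrightarrow> is_subring R"
  unfolding level_datum_def is_order_def by blast
lemma level_m: "level_datum R m \<Sigma> \<Longrightarrow> integral_ideal R m"
  unfolding level_datum_def by blast
lemma level_emb: "level_datum R m \<Sigma> \<Longrightarrow> \<forall>\<rho>\<in>\<Sigma>. real_embedding \<rho>"
  unfolding level_datum_def by blast

lemma m_sub_m':
  assumes "is_subring R'" "ideal_mult m R' \<subseteq> m'"
  shows "m \<subseteq> m'"
proof
  fix x assume "x \<in> m"
  then have "x * 1 \<in> ideal_mult m R'" using imult_mem subring_1[OF assms(1)] by blast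
  then show "x \<in> m'" using assms(2) by auto
qed

locale ext_setup =
  fixes R m \<Sigma> R' m' \<Sigma>'
  assumes L: "level_datum R m \<Sigma>" and L': "level_datum R' m' \<Sigma>'"
    and sub: "R \<subseteq> R'" and mm: "ideal_mult m R' \<subseteq> m'" and ss: "\<Sigma>' \<subseteq> \<Sigma>"
begin

lemma sr: "is_subring R" and sr': "is_subring R'" and I: "idl R m" and I': "idl R' m'"
  and emb: "\<forall>\<rho>\<in>\<Sigma>. real_embedding \<rho>" and emb': "\<forall>\<rho>\<in>\<Sigma>'. real_embedding \<rho>"
  using level_sr[OF L] level_sr[OF L'] level_idl[OF L] level_idl[OF L'] level_emb[OF L] level_emb[OF L'] by auto

lemma gens_sub: "idl.gens R m \<Sigma> \<subseteq> idl.gens R' m' \<Sigma>'"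
  by (rule gens_mono[OF I I' sub m_sub_m'[OF sr' mm] ss])

lemma wd:
  assumes c: "O_submodule R c" and M: "O_submodule R M"
    and eq: "ideal_class R m \<Sigma> c = ideal_class R m \<Sigma> M"
  shows "ideal_class R' m' \<Sigma>' (ideal_mult c R') = ideal_class R' m' \<Sigma>' (ideal_mult M R')"
proof -
  have "c \<in> ideal_class R m \<Sigma> M" using idl.class_self[OF I emb c] eq by simp
  then obtain \<alpha> where a: "\<alpha> \<in> idl.gens R m \<Sigma>" "c = smul \<alpha> M" using idl.class_eq[OF I M] by blast
  have "ideal_mult c R' = smul \<alpha> (ideal_mult M R')" using a(2) imult_smul by simp
  then show ?thesis
    using idl.class_smul[OF I' emb' imult_submod[OF subring_submod[OF sr']] ] a(1) gens_sub by auto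
qed

definition hmap where
  "hmap X = ideal_class R' m' \<Sigma>' (ideal_mult (SOME a. a \<in> J_star R m \<and> X = ideal_class R m \<Sigma> a) R')"

lemma hmap_class:
  assumes "O_submodule R M" "ideal_class R m \<Sigma> M \<in> carrier (ray_class_group R m \<Sigma>)"
  shows "hmap (ideal_class R m \<Sigma> M) = ideal_class R' m' \<Sigma>' (ideal_mult M R')"
proof -
  have "\<exists>a. a \<in> J_star R m \<and> ideal_class R m \<Sigma> M = ideal_class R m \<Sigma> a"
    using assms(2) idl.carrier_eq[OF I] by auto
  then have "(SOME a. a \<in> J_star R m \<and> ideal_class R m \<Sigma> M = ideal_class R m \<Sigma> a) \<in> J_star R m \<and>
     ideal_class R m \<Sigma> M = ideal_class R m \<Sigma> (SOME a. a \<in> J_star R m \<and> ideal_class R m \<Sigma> M = ideal_class R m \<Sigma> a)"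
    by (rule someI_ex)
  then show ?thesis unfolding hmap_def using wd assms(1) J_submod by metis
qed

lemma hmap_J: "a \<in> J_star R m \<Longrightarrow> hmap (ideal_class R m \<Sigma> a) = ideal_class R' m' \<Sigma>' (ideal_mult a R')"
  by (rule hmap_class[OF J_submod]) (auto simp: idl.carrier_eq[OF I])

lemma aR'_J: "a \<in> J_star R m \<Longrightarrow> ideal_mult a R' \<in> J_star R' m'"
  by (rule J_ext[OF sr sr' sub level_m[OF L] level_m[OF L'] mm])

lemma hmap_ext: "is_ext_map R m \<Sigma> R' m' \<Sigma>' hmap"
  unfolding is_ext_map_def
proof (intro conjI ballI homI)
  show "hmap (ideal_class R m \<Sigma> a) = ideal_class R' m' \<Sigma>' (ideal_mult a R')" if "a \<in> J_star R m" for a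
    using hmap_J that by blast
  show "hmap X \<in> carrier (ray_class_group R' m' \<Sigma>')" if "X \<in> carrier (ray_class_group R m \<Sigma>)" for X
  proof -
    have "X \<in> ideal_class R m \<Sigma> ` J_star R m" using that idl.carrier_eq[OF I, of \<Sigma>] by simp
    then obtain a where a: "a \<in> J_star R m" "X = ideal_class R m \<Sigma> a" by blast
    show ?thesis using hmap_J[OF a(1)] a(2) aR'_J[OF a(1)] idl.carrier_eq[OF I'] by auto
  qed
  show "hmap (X \<otimes>\<^bsub>ray_class_group R m \<Sigma>\<^esub> Y) = hmap X \<otimes>\<^bsub>ray_class_group R' m' \<Sigma>'\<^esub> hmap Y"
    if "X \<in> carrier (ray_class_group R m \<Sigma>)" "Y \<in> carrier (ray_class_group R m \<Sigma>)" for X Y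
  proof -
    have "X \<in> ideal_class R m \<Sigma> ` J_star R m" using that idl.carrier_eq[OF I, of \<Sigma>] by simp
    then obtain a where a: "a \<in> J_star R m" "X = ideal_class R m \<Sigma> a" by blast
    have "Y \<in> ideal_class R m \<Sigma> ` J_star R m" using that idl.carrier_eq[OF I, of \<Sigma>] by simp
    then obtain b where b: "b \<in> J_star R m" "Y = ideal_class R m \<Sigma> b" by blast
    have sa: "O_submodule R a" "O_submodule R b" using a b J_submod by auto
    have XY: "X \<otimes>\<^bsub>ray_class_group R m \<Sigma>\<^esub> Y = ideal_class R m \<Sigma> (ideal_mult a b)"
      using idl.class_mult[OF I emb sa] a b idl.mult_eq[OF I] by simp
    have XYc: "X \<otimes>\<^bsub>ray_class_group R m \<Sigma>\<^esub> Y \<in> carrier (ray_class_group R m \<Sigma>)"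
    proof -
      have "ideal_mult a b \<in> J_star R m" by (rule J_mult[OF sr level_m[OF L] a(1) b(1)])
      then show ?thesis using XY idl.carrier_eq[OF I] by auto
    qed
    have "hmap (X \<otimes>\<^bsub>ray_class_group R m \<Sigma>\<^esub> Y) = ideal_class R' m' \<Sigma>' (ideal_mult (ideal_mult a b) R')"
      using hmap_class[OF imult_submod[OF sa(2)]] XY XYc by simp
    also have "\<dots> = ideal_class R' m' \<Sigma>' (ideal_mult (ideal_mult a R') (ideal_mult b R'))"
      using imult_4[of a R' b] RR[OF sr'] by simp
    also have "\<dots> = hmap X \<otimes>\<^bsub>ray_class_group R' m' \<Sigma>'\<^esub> hmap Y"
      using idl.class_mult[OF I' emb' imult_submod[OF subring_submod[OF sr']] imult_submod[OF subring_submod[OF sr']]]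
        hmap_J a b idl.mult_eq[OF I'] by simp
    finally show ?thesis .
  qed
qed

end


lemma level_order: "level_datum R m \<Sigma> \<Longrightarrow> is_order R"
  unfolding level_datum_def by blast

lemma prod_mult_mem:
  fixes w :: "nat \<Rightarrow> 'k::field_char_0"
  assumes sr: "is_subring R" and d: "\<forall>i<n. of_int (d i) * w i \<in> R" and j: "j < n"
  shows "of_int (\<Prod>i<n. d i) * w j \<in> R"
proof -
  have "(\<Prod>i<n. d i) = d j * (\<Prod>i\<in>{..<n} - {j}. d i)"
    using j by (simp add: prod.remove)
  then have "of_int (\<Prod>i<n. d i) * w j = of_int (\<Prod>i\<in>{..<n} - {j}. d i) * (of_int (d j) * w j)"
    by (simp add: ac_simps)
  also have "\<dots> \<in> R"
  proof -
    have "of_int (d j) * w j \<in> R" using d j by blast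
    then show ?thesis by (rule subring_mult[OF sr subring_of_int[OF sr]])
  qed
  finally show ?thesis .
qed

context ext_setup begin

lemma ordR: "is_order R" and ordR': "is_order R'"
  using level_order[OF L] level_order[OF L'] by auto

lemma mR: "integral_ideal R m" and mR': "integral_ideal R' m'"
  using level_m[OF L] level_m[OF L'] by auto

lemma m_m': "m \<subseteq> m'" by (rule m_sub_m'[OF sr' mm])

lemma N_exists:
  assumes nf: "number_field TYPE('a)"
  shows "\<exists>N::int. N \<noteq> 0 \<and> of_int N \<in> m \<and> (\<forall>x\<in>R'. of_int N * x \<in> m)"
proof -
  have "m \<noteq> {0}" using L unfolding level_datum_def by blast
  then obtain z where z: "z \<in> m" "z \<noteq> 0" using submod_0[OF integral_submod[OF mR]] by blast
  obtain d1 where d1: "d1 \<noteq> 0" "of_int d1 * (1 / z) \<in> R" using order_full[OF nf ordR] by blast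
  have d1m: "of_int d1 \<in> m"
  proof -
    have "z * (of_int d1 * (1 / z)) \<in> m" by (rule submod_mult'[OF integral_submod[OF mR] d1(2) z(1)])
    then show ?thesis using z(2) by simp
  qed
  define n where "n = nf_degree TYPE('a)"
  obtain w where w: "\<forall>i<n. w i \<in> R'" "R' = Z_span w n"
    using ordR' unfolding is_order_def n_def by blast
  have "\<forall>i<n. \<exists>d::int. d \<noteq> 0 \<and> of_int d * w i \<in> R" using order_full[OF nf ordR] by blast
  then obtain d where d: "\<forall>i<n. d i \<noteq> 0 \<and> of_int (d i) * w i \<in> R" by metis
  define D2 where "D2 = (\<Prod>i<n. d i)"
  have D2: "D2 \<noteq> 0" unfolding D2_def using d by (simp add: prod_zero_iff)
  have D2w: "of_int D2 * w j \<in> R" if "j < n" for j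
    unfolding D2_def using prod_mult_mem[OF sr, of n d w j] d that by blast
  have D2x: "of_int D2 * x \<in> R" if xR: "x \<in> R'" for x
  proof -
    obtain c where c: "x = (\<Sum>i<n. of_int (c i) * w i)" using xR w(2) unfolding Z_span_def by blast
    have "of_int D2 * x = (\<Sum>i<n. of_int (c i) * (of_int D2 * w i))"
      unfolding c by (simp add: sum_distrib_left ac_simps)
    also have "\<dots> \<in> R"
    proof (rule subring_sum[OF sr])
      fix i assume "i \<in> {..<n}"
      then show "of_int (c i) * (of_int D2 * w i) \<in> R"
        using subring_mult[OF sr subring_of_int[OF sr] D2w] by simp
    qed
    finally show ?thesis .
  qed
  have Nm: "of_int (d1 * D2) * x \<in> m" if "x \<in> R'" for x
  proof -
    have "of_int d1 * (of_int D2 * x) \<in> m" by (rule submod_mult'[OF integral_submod[OF mR] D2x[OF that] d1m])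
    then show ?thesis by (simp add: ac_simps)
  qed
  moreover have "of_int (d1 * D2) \<in> m" using Nm[of 1] subring_1[OF sr'] by simp
  moreover have "d1 * D2 \<noteq> 0" using d1 D2 by simp
  ultimately show ?thesis by blast
qed

lemma quot_finite:
  assumes N: "N \<noteq> 0"
  shows "\<exists>F. finite F \<and> (\<forall>x\<in>R'. \<exists>y\<in>F. x - y \<in> smul (of_int N) R')"
proof -
  define n where "n = nf_degree TYPE('a)"
  obtain w where w: "\<forall>i<n. w i \<in> R'" "R' = Z_span w n" using ordR' unfolding is_order_def n_def by blast
  define M where "M = \<bar>N\<bar>"
  have M: "M > 0" unfolding M_def using N by simp
  define F where "F = (\<lambda>c. \<Sum>i<n. of_int (c i) * w i) ` ({..<n} \<rightarrow>\<^sub>E {0..<M})"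
  have "finite F" unfolding F_def by (intro finite_imageI finite_PiE) auto
  moreover have "\<exists>y\<in>F. x - y \<in> smul (of_int N) R'" if x: "x \<in> R'" for x
  proof -
    obtain c where c: "x = (\<Sum>i<n. of_int (c i) * w i)" using x w(2) unfolding Z_span_def by blast
    define c' where "c' = restrict (\<lambda>i. c i mod M) {..<n}"
    have c'P: "c' \<in> {..<n} \<rightarrow>\<^sub>E {0..<M}" unfolding c'_def using M by auto
    define y where "y = (\<Sum>i<n. of_int (c' i) * w i)"
    have yF: "y \<in> F" unfolding F_def y_def using c'P by blast
    define q where "q i = c i div M" for i
    have "x - y = (\<Sum>i<n. of_int (c i - c' i) * w i)" unfolding c y_def by (simp add: sum_subtractf algebra_simps)
    also have "\<dots> = (\<Sum>i<n. of_int M * (of_int (q i) * w i))"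
    proof (intro sum.cong refl)
      fix i assume "i \<in> {..<n}"
      then have "c i - c' i = M * q i" unfolding c'_def q_def by (simp add: minus_mod_eq_mult_div)
      then have "(of_int (c i - c' i) :: 'a) = of_int M * of_int (q i)" by simp
      then show "of_int (c i - c' i) * w i = of_int M * (of_int (q i) * w i)" by (simp add: mult.assoc)
    qed
    also have "\<dots> = of_int M * (\<Sum>i<n. of_int (q i) * w i)" by (simp add: sum_distrib_left)
    also have "(of_int M :: 'a) = of_int N * of_int (sgn N)" unfolding M_def by (simp add: abs_sgn)
    also have "of_int N * of_int (sgn N) * (\<Sum>i<n. of_int (q i) * w i) = of_int N * (of_int (sgn N) * (\<Sum>i<n. of_int (q i) * (w i :: 'a)))"
      by (simp add: mult.assoc)
    finally have eq: "x - y = of_int N * (of_int (sgn N) * (\<Sum>i<n. of_int (q i) * w i))" .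
    have "of_int (sgn N) * (\<Sum>i<n. of_int (q i) * w i) \<in> R'"
      using w(1) by (intro subring_mult[OF sr' subring_of_int[OF sr']] subring_sum[OF sr'] subring_mult[OF sr' subring_of_int[OF sr']]) auto
    then have "x - y \<in> smul (of_int N) R'" unfolding eq by (rule smul_mem)
    then show ?thesis using yF by blast
  qed
  ultimately show ?thesis by blast
qed

lemma fr_inst:
  assumes N: "N \<noteq> 0" "\<forall>x\<in>R'. of_int N * x \<in> m"
  shows "\<exists>F. fr R' (smul (of_int N) R') F"
proof -
  obtain F where F: "finite F" "\<forall>x\<in>R'. \<exists>y\<in>F. x - y \<in> smul (of_int N) R'" using quot_finite[OF N(1)] by blast
  have "smul (of_int N) R' \<subseteq> R'" unfolding smul_def using subring_mult[OF sr' subring_of_int[OF sr']] by auto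
  then have "fr R' (smul (of_int N) R') F"
    using F sr' smul_submod[OF subring_submod[OF sr']] by unfold_locales auto
  then show ?thesis by blast
qed

end


context ext_setup begin

lemma pullback:
  assumes N0: "N \<noteq> 0" and N: "\<forall>x\<in>R'. of_int N * x \<in> m"
    and b'1: "O_submodule R' b'" and b'2: "b' \<subseteq> R'" and c'1: "O_submodule R' c'" and c'2: "ideal_mult b' c' = R'"
    and v0: "v0 \<in> b'" "y0 \<in> R'" "v0 = 1 - of_int N * y0"
  shows "b' \<inter> R \<in> J_star R m \<and> ideal_mult (b' \<inter> R) R' = b'"
proof -
  define a where "a = b' \<inter> R"
  have mI: "O_submodule R m" and mRR: "m \<subseteq> R" using mR unfolding integral_ideal_def by auto
  have NR: "of_int N * x \<in> R" if "x \<in> R'" for x using N that mRR by blast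
  have Ny0: "of_int N * y0 \<in> m" using N v0(2) by blast
  have v0R: "v0 \<in> R" unfolding v0(3) using subring_diff[OF sr subring_1[OF sr]] Ny0 mRR by blast
  have v0a: "v0 \<in> a" unfolding a_def using v0 v0R by blast
  have b'R: "O_submodule R b'" by (rule submod_sub[OF b'1 sub])
  have aI: "O_submodule R a" unfolding a_def O_submodule_def
    using b'R subring_submod[OF sr] unfolding O_submodule_def by blast
  have aR: "a \<subseteq> R" unfolding a_def by blast
  have Nb': "of_int N * z \<in> a" if "z \<in> b'" for z
  proof -
    have "of_int N * z \<in> b'" by (rule submod_mult[OF b'1 subring_of_int[OF sr'] that])
    moreover have "of_int N * z \<in> R" using NR that b'2 by blast
    ultimately show ?thesis unfolding a_def by blast
  qed
  have aR': "ideal_mult a R' = b'"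
  proof
    show "ideal_mult a R' \<subseteq> b'"
      by (rule imult_subset) (use submod_0[OF b'1] submod_add[OF b'1] submod_mult'[OF b'1] in \<open>auto simp: a_def\<close>)
    show "b' \<subseteq> ideal_mult a R'"
    proof
      fix z assume z: "z \<in> b'"
      have "z = (v0 + of_int N * y0) * z" using v0(3) by simp
      then have "z = v0 * z + (of_int N * z) * y0" by (simp add: algebra_simps)
      moreover have "v0 * z \<in> ideal_mult a R'" using imult_mem[OF v0a] z b'2 by blast
      moreover have "(of_int N * z) * y0 \<in> ideal_mult a R'" using imult_mem[OF Nb'[OF z] v0(2)] .
      ultimately show "z \<in> ideal_mult a R'" using imult_add by metis
    qed
  qed
  have am: "ideal_add a m = R"
    using iadd_eq_O[OF sr aI aR mI mRR] v0a Ny0 v0(3) by force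
  have b'nz: "\<exists>z\<in>b'. z \<noteq> 0"
  proof (rule ccontr)
    assume "\<not> (\<exists>z\<in>b'. z \<noteq> 0)"
    then have "ideal_mult b' c' \<subseteq> {0}" by (intro imult_subset) auto
    then show False using c'2 subring_1[OF sr'] by auto
  qed
  then obtain z0 where z0: "z0 \<in> b'" "z0 \<noteq> 0" by blast
  define d where "d = of_int N * z0"
  have da: "d \<in> a" and d0: "d \<noteq> 0" unfolding d_def using Nb'[OF z0(1)] z0(2) N0 by auto
  define C where "C = ideal_colon R a"
  have CI: "O_submodule R C" unfolding C_def O_submodule_def ideal_colon_def
  proof (intro conjI ballI)
    show "0 \<in> {x. \<forall>b\<in>a. x * b \<in> R}" using subring_0[OF sr] by simp
    fix x y assume x: "x \<in> {x. \<forall>b\<in>a. x * b \<in> R}" and y: "y \<in> {x. \<forall>b\<in>a. x * b \<in> R}"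
    show "x + y \<in> {x. \<forall>b\<in>a. x * b \<in> R}" using x y subring_add[OF sr] by (simp add: distrib_right)
    show "x - y \<in> {x. \<forall>b\<in>a. x * b \<in> R}" using x y subring_diff[OF sr] by (simp add: left_diff_distrib)
  next
    fix r x assume r: "r \<in> R" and x: "x \<in> {x. \<forall>b\<in>a. x * b \<in> R}"
    show "r * x \<in> {x. \<forall>b\<in>a. x * b \<in> R}" using x r subring_mult[OF sr] by (simp add: mult.assoc)
  qed
  have C1: "1 \<in> C" unfolding C_def ideal_colon_def using aR by auto
  have Cfrac: "fractional_ideal R C" unfolding fractional_ideal_def
  proof (intro conjI CI bexI[of _ d] ballI)
    show "C \<noteq> {0}" using C1 by auto
    show "d \<noteq> 0" by (rule d0)
    show "d \<in> R" using da aR by blast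
    fix x assume "x \<in> C" then show "d * x \<in> R" using da unfolding C_def ideal_colon_def by (auto simp: mult.commute)
  qed
  have aCI: "O_submodule R (ideal_mult a C)" by (rule imult_submod[OF CI])
  have ac': "ideal_mult a c' = R'"
  proof -
    have "ideal_mult a c' = ideal_mult a (ideal_mult R' c')" using imult_left_O[OF sr' c'1] by simp
    also have "\<dots> = ideal_mult b' c'" using aR' by (simp add: imult_assoc[symmetric])
    finally show ?thesis using c'2 by simp
  qed
  have NaC: "of_int N * x \<in> ideal_mult a C" if "x \<in> ideal_mult a c'" for x
    using that
  proof (rule imult_induct[where P="\<lambda>x. of_int N * x \<in> ideal_mult a C"])
    show "of_int N * 0 \<in> ideal_mult a C" using imult_zero by simp
    show "of_int N * (u + v) \<in> ideal_mult a C" if "of_int N * u \<in> ideal_mult a C" "of_int N * v \<in> ideal_mult a C" for u v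
      using that imult_add by (simp add: distrib_left)
    show "of_int N * (p * q) \<in> ideal_mult a C" if p: "p \<in> a" and q: "q \<in> c'" for p q
    proof -
      have "of_int N * q \<in> C" unfolding C_def ideal_colon_def
      proof (intro CollectI ballI)
        fix w assume "w \<in> a"
        then have "w * q \<in> R'" using imult_mem[of w b' q c'] q c'2 unfolding a_def by blast
        then have "of_int N * (w * q) \<in> R" by (rule NR)
        then show "of_int N * q * w \<in> R" by (simp add: ac_simps)
      qed
      then have "p * (of_int N * q) \<in> ideal_mult a C" by (rule imult_mem[OF p])
      then show ?thesis by (simp add: ac_simps)
    qed
  qed
  have "1 \<in> ideal_mult a c'" using ac' subring_1[OF sr'] by simp
  then have NaC1: "of_int N \<in> ideal_mult a C" using NaC[of 1] by simp
  have v0aC: "v0 \<in> ideal_mult a C" using imult_mem[OF v0a C1] by simp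
  have one: "1 = v0 * (v0 + 2 * (of_int N * y0)) + (of_int N * y0 * y0) * of_int N"
  proof -
    have "1 = (v0 + of_int N * y0) ^ 2" using v0(3) by simp
    then show ?thesis by (simp add: power2_eq_square algebra_simps)
  qed
  have t1: "v0 * (v0 + 2 * (of_int N * y0)) \<in> ideal_mult a C"
  proof -
    have "v0 + 2 * (of_int N * y0) \<in> R"
      using v0R Ny0 mRR subring_add[OF sr] subring_mult[OF sr subring_of_int[OF sr, of 2]] by auto
    then show ?thesis using submod_mult'[OF aCI _ v0aC] by blast
  qed
  have t2: "(of_int N * y0 * y0) * of_int N \<in> ideal_mult a C"
  proof -
    have "of_int N * (y0 * y0) \<in> R" using NR subring_mult[OF sr' v0(2) v0(2)] by blast
    then have "(of_int N * (y0 * y0)) * of_int N \<in> ideal_mult a C" by (rule submod_mult[OF aCI _ NaC1])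
    then show ?thesis by (simp add: ac_simps)
  qed
  have "1 \<in> ideal_mult a C" using one submod_add[OF aCI t1 t2] by simp
  then have aC: "ideal_mult a C = R"
  proof -
    assume one: "1 \<in> ideal_mult a C"
    have "ideal_mult a C \<subseteq> R"
      by (rule imult_subset) (auto simp: C_def ideal_colon_def mult.commute intro: subring_0[OF sr] subring_add[OF sr])
    moreover have "R \<subseteq> ideal_mult a C" using submod_mult[OF aCI _ one] by force
    ultimately show ?thesis by blast
  qed
  have afrac: "fractional_ideal R a" unfolding fractional_ideal_def
    using aI da d0 subring_1[OF sr] aR by (intro conjI bexI[of _ 1]) auto
  have ainv: "invertible_ideal R a" unfolding invertible_ideal_def using afrac Cfrac aC by blast
  have Rfrac: "fractional_ideal R R" unfolding fractional_ideal_def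
    using subring_submod[OF sr] subring_1[OF sr] by (intro conjI bexI[of _ 1]) auto
  have Rinv: "invertible_ideal R R" unfolding invertible_ideal_def using Rfrac RR[OF sr] by blast
  have Rint: "integral_ideal R R" unfolding integral_ideal_def using subring_submod[OF sr] by blast
  have aint: "integral_ideal R a" unfolding integral_ideal_def using aI aR by blast
  have Rm: "ideal_add R m = R"
    using iadd_eq_O[OF sr subring_submod[OF sr] order_refl mI mRR] subring_1[OF sr] submod_0[OF mI] by force
  have acol: "a = ideal_colon a R"
  proof
    show "a \<subseteq> ideal_colon a R" unfolding ideal_colon_def using submod_mult'[OF aI] by blast
    show "ideal_colon a R \<subseteq> a" unfolding ideal_colon_def using subring_1[OF sr] by force
  qed
  have "coprime_to R m a" unfolding coprime_to_def using aint Rint Rinv am Rm acol by blast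
  then have "a \<in> J_star R m" unfolding J_star_def using ainv by blast
  then show ?thesis using aR' unfolding a_def by blast
qed

end


context ext_setup begin

lemma construct:
  assumes nf: "number_field TYPE('a)" and N0: "N \<noteq> 0" and Nm: "of_int N \<in> m"
    and N: "\<forall>x\<in>R'. of_int N * x \<in> m" and a': "a' \<in> J_star R' m'"
  shows "\<exists>\<alpha>\<in>idl.gens R' m' \<Sigma>'. \<exists>v0\<in>smul \<alpha> a'. \<exists>y0\<in>R'. v0 = 1 - of_int N * y0 \<and> smul \<alpha> a' \<subseteq> R' \<and>
      (\<exists>c'. O_submodule R' c' \<and> ideal_mult (smul \<alpha> a') c' = R') \<and> O_submodule R' (smul \<alpha> a')"
proof -
  define I where "I = smul (of_int N) R'"
  obtain F where frI: "fr R' I F" using fr_inst[OF N0 N] unfolding I_def by blast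
  interpret fr R' I F by (rule frI)
  have mI': "O_submodule R' m'" and m'R: "m' \<subseteq> R'" using mR' unfolding integral_ideal_def by auto
  have Im': "I \<subseteq> m'" unfolding I_def smul_def using N m_m' by auto
  have cgm: "x - y \<in> m'" if "cg x y" for x y using that Im' unfolding cg_def by blast
  have a'I: "O_submodule R' a'" using J_submod[OF a'] .
  obtain Ni where Ni: "fractional_ideal R' Ni" "ideal_mult a' Ni = R'"
    using a' unfolding J_star_def invertible_ideal_def by blast
  have NiI: "O_submodule R' Ni" using frac_submod[OF Ni(1)] .
  obtain a1 b1 where ab: "integral_ideal R' a1" "integral_ideal R' b1" "invertible_ideal R' b1"
    "ideal_add a1 m' = R'" "ideal_add b1 m' = R'" "a' = ideal_colon a1 b1"
    using a' unfolding J_star_def coprime_to_def by blast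
  have a1R: "a1 \<subseteq> R'" and b1R: "b1 \<subseteq> R'" using ab unfolding integral_ideal_def by auto
  have a1I: "O_submodule R' a1" and b1I: "O_submodule R' b1" using ab unfolding integral_ideal_def by auto
  have a1a': "a1 \<subseteq> a'" unfolding ab(6) ideal_colon_def using submod_mult'[OF a1I] b1R by blast
  have Ni_eq: "Ni = ideal_colon R' a'"
    using colon_eq[OF sr' subring_submod[OF sr'] a'I NiI Ni(2)] imult_left_O[OF sr' NiI] by simp
  have prod: "p * q \<in> R'" if "p \<in> Ni" "q \<in> a'" for p q
    using imult_mem[OF that(2) that(1)] Ni(2) by (simp add: mult.commute)
  have b1Ni: "b1 \<subseteq> Ni"
  proof
    fix x assume x: "x \<in> b1"
    have "\<forall>z\<in>a'. x * z \<in> R'"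
    proof
      fix z assume "z \<in> a'"
      then have "z * x \<in> a1" using x unfolding ab(6) ideal_colon_def by blast
      then show "x * z \<in> R'" using a1R by (auto simp: mult.commute)
    qed
    then show "x \<in> Ni" unfolding Ni_eq ideal_colon_def by blast
  qed
  obtain t g' where tg: "t \<in> b1" "g' \<in> m'" "t + g' = 1"
    using iadd_eq_O[OF sr' b1I b1R mI' m'R] ab(5) by blast
  have tNi: "t \<in> Ni" and tR: "t \<in> R'" using tg b1Ni b1R by auto
  have "1 - t = g'" using tg(3) by (metis add_diff_cancel_left')
  then have omt: "1 - t \<in> m'" using tg(2) by simp
  obtain s where s: "s \<in> a1" "s \<noteq> 0" "1 - s \<in> m'"
  proof -
    obtain s0 g where sg: "s0 \<in> a1" "g \<in> m'" "s0 + g = 1"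
      using iadd_eq_O[OF sr' a1I a1R mI' m'R] ab(4) by blast
    show ?thesis
    proof (cases "s0 = 0")
      case False
      have "1 - s0 = g" by (subst sg(3)[symmetric]) simp
      then show ?thesis using that[of s0] sg False by simp
    next
      case True
      then have one: "1 \<in> m'" using sg by simp
      have "\<exists>s\<in>a1. s \<noteq> 0"
      proof (rule ccontr)
        assume na: "\<not> (\<exists>s\<in>a1. s \<noteq> 0)"
        obtain b where b: "b \<in> b1" "b \<noteq> 0" using frac_nonzero[OF inv_frac[OF ab(3)]] by blast
        have "\<forall>z\<in>a'. z = 0"
        proof
          fix z assume "z \<in> a'"
          then have "z * b \<in> a1" using b unfolding ab(6) ideal_colon_def by blast
          then show "z = 0" using na b(2) by auto
        qed
        moreover obtain z where "z \<in> a'" "z \<noteq> 0" using frac_nonzero[OF inv_frac] a' unfolding J_star_def by blast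
        ultimately show False by blast
      qed
      then obtain s where "s \<in> a1" "s \<noteq> 0" by blast
      moreover have "1 - s \<in> m'"
      proof -
        have "(1 - s) * 1 \<in> m'" by (rule submod_mult[OF mI' _ one]) (use \<open>s \<in> a1\<close> a1R subring_diff[OF sr' subring_1[OF sr']] in blast)
        then show ?thesis by simp
      qed
      ultimately show ?thesis using that by blast
    qed
  qed
  have sa': "s \<in> a'" using s(1) a1a' by blast
  have sR: "s \<in> R'" using s(1) a1R by blast
  have sS: "s \<in> S_m R' m'"
  proof -
    have "s * 1 + (1 - s) = 1" by simp
    then show ?thesis unfolding idl.S_iff[OF I'] using sR s(3) subring_1[OF sr'] by blast
  qed
  define h where "h = 1 - t * s"
  have hm: "h \<in> m'"
  proof -
    have "h = (1 - t) + t * (1 - s)" unfolding h_def by (simp add: algebra_simps)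
    moreover have "t * (1 - s) \<in> m'" by (rule submod_mult[OF mI' tR s(3)])
    ultimately show ?thesis using submod_add[OF mI' omt] by simp
  qed
  have hR: "h \<in> R'" using hm m'R by blast
  have "1 \<in> ideal_mult Ni a'" using Ni(2) subring_1[OF sr'] by (simp add: imult_comm)
  then obtain k :: nat and u v where uv: "\<forall>i<k. u i \<in> Ni \<and> v i \<in> a'" "1 = (\<Sum>i<k. u i * v i)"
    unfolding ideal_mult_def by blast
  define U where "U j = (if j = 0 then t else h * u (j - 1))" for j
  define V where "V j = (if j = 0 then s else v (j - 1))" for j
  define A where "A j = U j * V j" for j
  have UNi: "U j \<in> Ni" if "j < Suc k" for j
    using that tNi uv(1) submod_mult[OF NiI hR] unfolding U_def by (cases j) auto
  have Va': "V j \<in> a'" if "j < Suc k" for j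
    using that sa' uv(1) unfolding V_def by (cases j) auto
  have AR: "A j \<in> R'" if "j < Suc k" for j unfolding A_def using prod UNi Va' that by blast
  have sumA: "(\<Sum>j<Suc k. A j) = 1"
  proof -
    have "(\<Sum>j<Suc k. A j) = A 0 + (\<Sum>i<k. A (Suc i))" by (rule sum.lessThan_Suc_shift)
    also have "(\<Sum>i<k. A (Suc i)) = h * (\<Sum>i<k. u i * v i)"
      unfolding A_def U_def V_def by (simp add: sum_distrib_left mult.assoc)
    also have "\<dots> = h" using uv(2) by simp
    finally show ?thesis unfolding A_def U_def V_def h_def by simp
  qed
  obtain e c where ec: "\<forall>i<Suc k. e i \<in> R' \<and> c i \<in> R' \<and> cg (e i * e i) (e i) \<and> cg (A i * c i) (e i) \<and> cg (e i * 1) (e i)"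
    "\<forall>i<Suc k. \<forall>j<Suc k. i \<noteq> j \<longrightarrow> cg (e i * e j) 0" "cg (\<Sum>i<Suc k. e i) 1"
    using FR2[of "Suc k" A 1 1] AR R_1 cg_refl sumA by auto
  define x where "x = (\<Sum>j<Suc k. e j * U j)"
  have xNi: "x \<in> Ni" unfolding x_def using ec(1) UNi by (intro submod_sum[OF NiI] submod_mult[OF NiI]) auto
  define z where "z = (\<Sum>j<Suc k. (e j * c j) * (x * V j))"
  have zj: "(e j * c j) * (x * V j) \<in> smul x a'" if j: "j < Suc k" for j
  proof -
    have "x * V j \<in> smul x a'" by (rule smul_mem[OF Va'[OF j]])
    moreover have "e j * c j \<in> R'" using ec(1) j R_mult by blast
    ultimately show ?thesis using submod_mult[OF smul_submod[OF a'I]] by blast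
  qed
  have zx: "z \<in> smul x a'" unfolding z_def using zj by (intro submod_sum[OF smul_submod[OF a'I]]) auto
  have termj: "cg ((e j * c j) * (x * V j)) (e j)" if j: "j < Suc k" for j
  proof -
    define T where "T i = (e i * e j) * (c j * (U i * V j))" for i
    have "(e j * c j) * (x * V j) = (\<Sum>i<Suc k. (e j * c j) * ((e i * U i) * V j))"
      unfolding x_def by (simp only: sum_distrib_left sum_distrib_right)
    also have "\<dots> = (\<Sum>i<Suc k. T i)" unfolding T_def by (intro sum.cong refl) (simp add: ac_simps)
    finally have "(e j * c j) * (x * V j) = (\<Sum>i<Suc k. T i)" .
    moreover have "cg (\<Sum>i<Suc k. T i) (\<Sum>i<Suc k. if i = j then T j else 0)"
    proof (rule cg_sum)
      fix i assume i: "i \<in> {..<Suc k}"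
      show "cg (T i) (if i = j then T j else 0)"
      proof (cases "i = j")
        case True then show ?thesis by (simp add: cg_refl)
      next
        case False
        have "U i * V j \<in> R'" using prod UNi Va' i j by blast
        then have "c j * (U i * V j) \<in> R'" using R_mult ec(1) j by blast
        then have "cg ((c j * (U i * V j)) * (e i * e j)) 0" using cg_0_mult ec(2) i j False by auto
        then show ?thesis unfolding T_def using False by (simp add: ac_simps)
      qed
    qed
    moreover have "(\<Sum>i<Suc k. if i = j then T j else 0) = T j" using j by simp
    moreover have "cg (T j) (e j)"
    proof -
      have ej: "e j \<in> R'" "c j \<in> R'" "cg (e j * e j) (e j)" "cg (A j * c j) (e j)" using ec(1) j by auto
      have "cg ((e j * e j) * (c j * A j)) (e j * e j)"
        using cg_mult[OF R_mult[OF ej(1) ej(1)] ej(1) ej(3)] ej(4) by (simp add: mult.commute)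
      then have "cg ((e j * e j) * (c j * A j)) (e j)" using cg_trans ej(3) by blast
      then show ?thesis unfolding T_def A_def by (simp add: ac_simps)
    qed
    ultimately show ?thesis using cg_trans by metis
  qed
  have zcg: "cg z 1"
  proof -
    have "cg z (\<Sum>j<Suc k. e j)" unfolding z_def by (rule cg_sum) (use termj in auto)
    then show ?thesis using cg_trans ec(3) by blast
  qed
  obtain vz where vz: "vz \<in> a'" "z = x * vz" using zx unfolding smul_def by blast
  have eSm: "e (Suc i) \<in> m'" if "i < k" for i
  proof -
    have c1: "A (Suc i) * c (Suc i) - e (Suc i) \<in> m'" using cgm ec(1) that by auto
    have eqA: "A (Suc i) * c (Suc i) = h * (u i * v i * c (Suc i))" unfolding A_def U_def V_def by (simp add: ac_simps)
    have uvc: "u i * v i * c (Suc i) \<in> R'"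
    proof -
      have "u i * v i \<in> R'" using prod uv(1) that by blast
      moreover have "c (Suc i) \<in> R'" using ec(1) that by simp
      ultimately show ?thesis using R_mult by blast
    qed
    have "h * (u i * v i * c (Suc i)) \<in> m'" by (rule submod_mult'[OF mI' uvc hm])
    then have "A (Suc i) * c (Suc i) \<in> m'" unfolding eqA .
    then have "A (Suc i) * c (Suc i) - (A (Suc i) * c (Suc i) - e (Suc i)) \<in> m'" using submod_diff[OF mI' _ c1] by blast
    then show ?thesis by simp
  qed
  have e0m: "e 0 - 1 \<in> m'"
  proof -
    have s1: "(\<Sum>j<Suc k. e j) - 1 \<in> m'" using cgm[OF ec(3)] .
    have eS: "(\<Sum>j<Suc k. e j) = e 0 + (\<Sum>i<k. e (Suc i))" by (rule sum.lessThan_Suc_shift)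
    have eq: "e 0 - 1 = ((\<Sum>j<Suc k. e j) - 1) - (\<Sum>i<k. e (Suc i))" unfolding eS by simp
    have sm: "(\<Sum>i<k. e (Suc i)) \<in> m'" using eSm by (intro submod_sum[OF mI']) auto
    show ?thesis unfolding eq by (rule submod_diff[OF mI' s1 sm])
  qed
  have xs: "x * s - s \<in> m'"
  proof -
    have "x = e 0 * t + (\<Sum>i<k. e (Suc i) * (h * u i))"
      unfolding x_def by (simp only: sum.lessThan_Suc_shift) (simp add: U_def)
    then have "x * s - s = (e 0 - 1) * (t * s) - (1 - t) * s + h * (\<Sum>i<k. e (Suc i) * (u i * s))"
      by (simp add: algebra_simps sum_distrib_left sum_distrib_right)
    moreover have "(e 0 - 1) * (t * s) \<in> m'" by (rule submod_mult'[OF mI' R_mult[OF tR sR] e0m])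
    moreover have "(1 - t) * s \<in> m'" by (rule submod_mult'[OF mI' sR omt])
    moreover have "h * (\<Sum>i<k. e (Suc i) * (u i * s)) \<in> m'"
    proof -
      have "(\<Sum>i<k. e (Suc i) * (u i * s)) \<in> R'"
      proof (rule subring_sum[OF sr'])
        fix i assume "i \<in> {..<k}"
        then have "u i * s \<in> R'" "e (Suc i) \<in> R'" using prod uv(1) sa' ec(1) by auto
        then show "e (Suc i) * (u i * s) \<in> R'" using R_mult by blast
      qed
      then show ?thesis by (rule submod_mult'[OF mI' _ hm])
    qed
    ultimately show ?thesis using submod_add[OF mI'] submod_diff[OF mI'] by metis
  qed
  obtain n0 where n0: "n0 \<in> Ni" "n0 \<noteq> 0" using frac_nonzero[OF Ni(1)] by blast
  obtain D where D: "D \<noteq> 0" "of_int D * (1 / n0) \<in> R'" using order_full[OF nf ordR'] by blast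
  have DNi: "of_int D \<in> Ni"
  proof -
    have "n0 * (of_int D * (1 / n0)) \<in> Ni" by (rule submod_mult'[OF NiI D(2) n0(1)])
    then show ?thesis using n0(2) by simp
  qed
  obtain B :: int where B: "\<forall>\<rho>. real_embedding \<rho> \<longrightarrow> \<bar>\<rho> x\<bar> < of_int B" using emb_bound[OF nf] by blast
  define B' where "B' = max B 1"
  define Lf where "Lf K = (of_int (N * N * D * D * K) :: 'a)" for K
  obtain K where K: "K \<ge> B'" "x + Lf K \<noteq> 0"
  proof (cases "x + Lf B' = 0")
    case False then show ?thesis using that[of B'] by simp
  next
    case True
    have "x + Lf (B' + 1) = (x + Lf B') + of_int (N * N * D * D)" unfolding Lf_def by (simp add: algebra_simps)
    then have "x + Lf (B' + 1) \<noteq> 0" using True N0 D(1) by simp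
    then show ?thesis using that[of "B' + 1"] by simp
  qed
  define \<alpha> where "\<alpha> = x + Lf K"
  have NNDD: "N * N * D * D \<ge> 1"
  proof -
    have "N * N * D * D = (N * D) * (N * D)" by (simp add: ac_simps)
    moreover have "N * D \<noteq> 0" using N0 D(1) by simp
    moreover have "(N * D) * (N * D) > 0"
    proof (cases "N * D > 0")
      case True then show ?thesis by (rule mult_pos_pos[OF True])
    next
      case False then have "N * D < 0" using \<open>N * D \<noteq> 0\<close> by linarith
      then show ?thesis using mult_neg_neg by blast
    qed
    ultimately show ?thesis by linarith
  qed
  have Kpos: "K \<ge> 1" "K \<ge> B" using K(1) unfolding B'_def by auto
  have LK: "N * N * D * D * K \<ge> K" using mult_right_mono[OF NNDD, of K] Kpos by simp
  have LNi: "Lf K \<in> Ni"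
  proof -
    have "of_int (N * N * D * K) * of_int D \<in> Ni" by (rule submod_mult[OF NiI subring_of_int[OF sr'] DNi])
    then show ?thesis unfolding Lf_def by (simp add: ac_simps)
  qed
  have aNi: "\<alpha> \<in> Ni" unfolding \<alpha>_def using submod_add[OF NiI xNi LNi] .
  have Lm: "Lf K * r \<in> m'" if "r \<in> R'" for r
  proof -
    have "of_int N * (of_int (N * D * D * K) * r) \<in> m" using N subring_mult[OF sr' subring_of_int[OF sr'] that] by blast
    then show ?thesis unfolding Lf_def using m_m' by (auto simp: ac_simps)
  qed
  have a_gens: "\<alpha> \<in> idl.gens R' m' \<Sigma>'"
    unfolding idl.gens_def[OF I']
  proof (intro CollectI conjI bexI ballI)
    show "\<alpha> \<noteq> 0" unfolding \<alpha>_def by (rule K(2))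
    show "s \<in> S_m R' m'" by (rule sS)
    show "s \<noteq> 0" by (rule s(2))
    show "x * s - s + Lf K * s \<in> m'" using submod_add[OF mI' xs Lm[OF sR]] .
    show "\<alpha> - 1 = (x * s - s + Lf K * s) / s" unfolding \<alpha>_def using s(2) by (simp add: field_simps)
  next
    fix \<rho> assume r: "\<rho> \<in> \<Sigma>'"
    then have re: "real_embedding \<rho>" using emb' by blast
    have "\<rho> (Lf K) = of_int (N * N * D * D * K)" unfolding Lf_def by (rule emb_of_int[OF re])
    then have "\<rho> \<alpha> = \<rho> x + of_int (N * N * D * D * K)" unfolding \<alpha>_def using emb_add[OF re] by simp
    moreover have "\<bar>\<rho> x\<bar> < of_int B" using B re by blast
    moreover have "(of_int B :: real) \<le> of_int (N * N * D * D * K)" using Kpos LK by linarith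
    ultimately show "0 < \<rho> \<alpha>" by linarith
  qed
  have sub_R: "smul \<alpha> a' \<subseteq> R'" unfolding smul_def using prod[OF aNi] by blast
  have "1 - z \<in> I" using zcg submod_uminus[OF Isub] unfolding cg_def by fastforce
  then obtain r where r: "r \<in> R'" "1 - z = of_int N * r" unfolding I_def smul_def by blast
  define r2 where "r2 = of_int (N * D * K) * (of_int D * vz)"
  have r2R: "r2 \<in> R'" unfolding r2_def using prod[OF DNi vz(1)] subring_mult[OF sr' subring_of_int[OF sr']] by blast
  have v0eq: "\<alpha> * vz = 1 - of_int N * (r - r2)"
  proof -
    have "\<alpha> * vz = z + Lf K * vz" unfolding \<alpha>_def vz(2) by (simp add: algebra_simps)
    also have "Lf K * vz = of_int N * r2" unfolding Lf_def r2_def by (simp add: ac_simps)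
    also have "z = 1 - of_int N * r" using r(2) by (simp add: algebra_simps)
    finally show ?thesis by (simp add: algebra_simps)
  qed
  have "\<alpha> * vz \<in> smul \<alpha> a'" by (rule smul_mem[OF vz(1)])
  moreover have "r - r2 \<in> R'" using r(1) r2R by (rule R_diff)
  moreover have "O_submodule R' (smul (1 / \<alpha>) Ni)" by (rule smul_submod[OF NiI])
  moreover have "ideal_mult (smul \<alpha> a') (smul (1 / \<alpha>) Ni) = R'"
    using Ni(2) K(2) unfolding \<alpha>_def[symmetric] by (simp add: imult_smul imult_smul_right smul_smul)
  moreover have "O_submodule R' (smul \<alpha> a')" by (rule smul_submod[OF a'I])
  ultimately show ?thesis using a_gens v0eq sub_R by blast
qed

lemma surj_core2:
  assumes nf: "number_field TYPE('a)" and a': "a' \<in> J_star R' m'"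
  shows "\<exists>a\<in>J_star R m. \<exists>\<alpha>\<in>idl.gens R' m' \<Sigma>'. ideal_mult a R' = smul \<alpha> a'"
proof -
  obtain N where N: "N \<noteq> 0" "of_int N \<in> m" "\<forall>x\<in>R'. of_int N * x \<in> m" using N_exists[OF nf] by blast
  obtain \<alpha> v0 y0 c' where c: "\<alpha> \<in> idl.gens R' m' \<Sigma>'" "v0 \<in> smul \<alpha> a'" "y0 \<in> R'" "v0 = 1 - of_int N * y0"
    "smul \<alpha> a' \<subseteq> R'" "O_submodule R' c'" "ideal_mult (smul \<alpha> a') c' = R'" "O_submodule R' (smul \<alpha> a')"
    using construct[OF nf N a'] by blast
  have "smul \<alpha> a' \<inter> R \<in> J_star R m \<and> ideal_mult (smul \<alpha> a' \<inter> R) R' = smul \<alpha> a'"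
    by (rule pullback[OF N(1) N(3) c(8) c(5) c(6) c(7) c(2) c(3) c(4)])
  then show ?thesis using c(1) by blast
qed

end


context ext_setup begin

lemma ext_unique:
  assumes "is_ext_map R m \<Sigma> R' m' \<Sigma>' h'" "x \<in> carrier (ray_class_group R m \<Sigma>)"
  shows "h' x = hmap x"
proof -
  have "x \<in> ideal_class R m \<Sigma> ` J_star R m" using assms(2) idl.carrier_eq[OF I, of \<Sigma>] by simp
  then obtain a where a: "a \<in> J_star R m" "x = ideal_class R m \<Sigma> a" by blast
  then show ?thesis using assms(1) hmap_J[OF a(1)] unfolding is_ext_map_def by simp
qed

lemma hmap_surj:
  assumes nf: "number_field TYPE('a)"
  shows "hmap ` carrier (ray_class_group R m \<Sigma>) = carrier (ray_class_group R' m' \<Sigma>')"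
proof
  show "hmap ` carrier (ray_class_group R m \<Sigma>) \<subseteq> carrier (ray_class_group R' m' \<Sigma>')"
    using hmap_ext unfolding is_ext_map_def hom_def by blast
  show "carrier (ray_class_group R' m' \<Sigma>') \<subseteq> hmap ` carrier (ray_class_group R m \<Sigma>)"
  proof
    fix Y assume "Y \<in> carrier (ray_class_group R' m' \<Sigma>')"
    then have "Y \<in> ideal_class R' m' \<Sigma>' ` J_star R' m'" using idl.carrier_eq[OF I', of \<Sigma>'] by simp
    then obtain a' where a': "a' \<in> J_star R' m'" "Y = ideal_class R' m' \<Sigma>' a'" by blast
    obtain a \<alpha> where a: "a \<in> J_star R m" "\<alpha> \<in> idl.gens R' m' \<Sigma>'" "ideal_mult a R' = smul \<alpha> a'"
      using surj_core2[OF nf a'(1)] by blast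
    have "hmap (ideal_class R m \<Sigma> a) = ideal_class R' m' \<Sigma>' (smul \<alpha> a')" using hmap_J[OF a(1)] a(3) by simp
    also have "\<dots> = Y" using idl.class_smul[OF I' emb' J_submod[OF a'(1)] a(2)] a'(2) by simp
    finally have "Y = hmap (ideal_class R m \<Sigma> a)" by simp
    moreover have "ideal_class R m \<Sigma> a \<in> carrier (ray_class_group R m \<Sigma>)" using a(1) idl.carrier_eq[OF I] by simp
    ultimately show "Y \<in> hmap ` carrier (ray_class_group R m \<Sigma>)" by blast
  qed
qed

end

lemma compose:
  assumes e1: "ext_setup R m \<Sigma> R' m' \<Sigma>'" and e2: "ext_setup R' m' \<Sigma>' R'' m'' \<Sigma>''"
    and e3: "ext_setup R m \<Sigma> R'' m'' \<Sigma>''"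
    and h1: "is_ext_map R m \<Sigma> R' m' \<Sigma>' h1" and h2: "is_ext_map R' m' \<Sigma>' R'' m'' \<Sigma>'' h2"
    and h3: "is_ext_map R m \<Sigma> R'' m'' \<Sigma>'' h3"
    and x: "x \<in> carrier (ray_class_group R m \<Sigma>)"
  shows "h2 (h1 x) = h3 x"
proof -
  have "x \<in> ideal_class R m \<Sigma> ` J_star R m" using x idl.carrier_eq[OF ext_setup.I[OF e1], of \<Sigma>] by simp
  then obtain a where a: "a \<in> J_star R m" "x = ideal_class R m \<Sigma> a" by blast
  have aJ: "ideal_mult a R' \<in> J_star R' m'" by (rule ext_setup.aR'_J[OF e1 a(1)])
  have "h2 (h1 x) = h2 (ideal_class R' m' \<Sigma>' (ideal_mult a R'))" using h1 a unfolding is_ext_map_def by simp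
  also have "\<dots> = ideal_class R'' m'' \<Sigma>'' (ideal_mult (ideal_mult a R') R'')" using h2 aJ unfolding is_ext_map_def by simp
  also have "ideal_mult (ideal_mult a R') R'' = ideal_mult a R''"
    using RR'[OF ext_setup.sr[OF e2] ext_setup.sr'[OF e2] ext_setup.sub[OF e2]] by (simp add: imult_assoc)
  also have "ideal_class R'' m'' \<Sigma>'' (ideal_mult a R'') = h3 x" using h3 a unfolding is_ext_map_def by simp
  finally show ?thesis .
qed

theorem lemma5p13:
  fixes Ord Ord' Ord'' m m' m'' :: "'k::field_char_0 set"
    and \<Sigma> \<Sigma>' \<Sigma>'' :: "('k \<Rightarrow> real) set"
  assumes "number_field TYPE('k)"
    and "level_datum Ord m \<Sigma>" and "level_datum Ord' m' \<Sigma>'"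
    and "Ord \<subseteq> Ord'" and "ideal_mult m Ord' \<subseteq> m'" and "\<Sigma>' \<subseteq> \<Sigma>"
  shows "(\<exists>h. is_ext_map Ord m \<Sigma> Ord' m' \<Sigma>' h \<and>
             (\<forall>h'. is_ext_map Ord m \<Sigma> Ord' m' \<Sigma>' h' \<longrightarrow>
                (\<forall>x\<in>carrier (ray_class_group Ord m \<Sigma>). h' x = h x)) \<and>
             h ` carrier (ray_class_group Ord m \<Sigma>) = carrier (ray_class_group Ord' m' \<Sigma>')) \<and>
         (level_datum Ord'' m'' \<Sigma>'' \<and> Ord' \<subseteq> Ord'' \<and> ideal_mult m' Ord'' \<subseteq> m'' \<and> \<Sigma>'' \<subseteq> \<Sigma>' \<longrightarrow>
            (\<forall>h1 h2 h3. is_ext_map Ord m \<Sigma> Ord' m' \<Sigma>' h1 \<and> is_ext_map Ord' m' \<Sigma>' Ord'' m'' \<Sigma>'' h2 \<and>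
                 is_ext_map Ord m \<Sigma> Ord'' m'' \<Sigma>'' h3 \<longrightarrow>
               (\<forall>x\<in>carrier (ray_class_group Ord m \<Sigma>). h2 (h1 x) = h3 x)))"
proof (intro conjI impI allI ballI)
  interpret e: ext_setup Ord m \<Sigma> Ord' m' \<Sigma>' using assms(2-6) by unfold_locales
  show "\<exists>h. is_ext_map Ord m \<Sigma> Ord' m' \<Sigma>' h \<and>
             (\<forall>h'. is_ext_map Ord m \<Sigma> Ord' m' \<Sigma>' h' \<longrightarrow>
                (\<forall>x\<in>carrier (ray_class_group Ord m \<Sigma>). h' x = h x)) \<and>
             h ` carrier (ray_class_group Ord m \<Sigma>) = carrier (ray_class_group Ord' m' \<Sigma>')"
    using e.hmap_ext e.ext_unique e.hmap_surj[OF assms(1)] by blast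
next
  fix h1 h2 h3 x
  assume H: "level_datum Ord'' m'' \<Sigma>'' \<and> Ord' \<subseteq> Ord'' \<and> ideal_mult m' Ord'' \<subseteq> m'' \<and> \<Sigma>'' \<subseteq> \<Sigma>'"
    and hh: "is_ext_map Ord m \<Sigma> Ord' m' \<Sigma>' h1 \<and> is_ext_map Ord' m' \<Sigma>' Ord'' m'' \<Sigma>'' h2 \<and>
                 is_ext_map Ord m \<Sigma> Ord'' m'' \<Sigma>'' h3"
    and x: "x \<in> carrier (ray_class_group Ord m \<Sigma>)"
  have e1: "ext_setup Ord m \<Sigma> Ord' m' \<Sigma>'" using assms(2-6) by unfold_locales
  have e2: "ext_setup Ord' m' \<Sigma>' Ord'' m'' \<Sigma>''" using assms(3) H by unfold_locales auto
  have mm: "ideal_mult m Ord'' \<subseteq> m''"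
  proof -
    have "ideal_mult m Ord'' = ideal_mult m (ideal_mult Ord' Ord'')"
      using RR'[OF ext_setup.sr[OF e2] ext_setup.sr'[OF e2] ext_setup.sub[OF e2]] by simp
    also have "\<dots> = ideal_mult (ideal_mult m Ord') Ord''" by (simp add: imult_assoc)
    also have "\<dots> \<subseteq> ideal_mult m' Ord''" by (rule imult_mono[OF assms(5) order_refl])
    also have "\<dots> \<subseteq> m''" using H by blast
    finally show ?thesis .
  qed
  have e3: "ext_setup Ord m \<Sigma> Ord'' m'' \<Sigma>''" using assms(2,4,6) H mm by unfold_locales auto
  show "h2 (h1 x) = h3 x" using compose[OF e1 e2 e3 _ _ _ x] hh by blast
qed


end
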